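(* Let $L\ge 3$, $W=(\mathbb{Z}/2\mathbb{Z})^{*L}$, $q\in[\frac{1}{L-1},1]$, $l\ge 2$, $\beta\in\mathbb{C}_q^1[W]\ominus S_1$ and $\gamma\in\mathbb{C}_q^l[W]\ominus S_l$. Then for every $m,n\in\mathbb{N}_0$ there exist real constants $b^{m,n}_{k,j},c^{m,n}_{k,j}$ ($0\le k\le m$, $0\le j\le n$) such that $$h_m\beta h_n=\sum_{k\le m,\,j\le n}b^{m,n}_{k,j}\beta_{k,j},\qquad h_m\gamma h_n=\sum_{k\le m,\,j\le n}c^{m,n}_{k,j}\gamma_{k,j},$$ and such that for $m,n\in\mathbb{N}$, $0\le k\le m$, $0\le j\le n$, $$c^{m,n}_{k,j}=b^{m,n}_{k,j}+b^{m,n}_{k+1,j+1},$$ with the convention $b^{m,n}_{m+1,n+1}=0$ (and more generally $b^{m,n}_{k,j}=0$ when $k>m$ or $j>n$).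
   Context: $W=(\mathbb{Z}/2\mathbb{Z})^{*L}$ is the free product of $L$ copies of $\mathbb{Z}/2\mathbb{Z}$ with canonical generating set $S$ and word length $|\cdot|$. Put $p=\frac{q-1}{q^2}$. $\mathbb{C}_q[W]$ is the $*$-algebra with linear basis $\{T_w\}_{w\in W}$, $T_e=1$, $T_w^*=T_{w^{-1}}$, and $T_sT_w=T_{sw}$ if $|sw|>|w|$, $T_sT_w=T_{sw}+pT_w$ if $|sw|<|w|$ ($s\in S,w\in W$). Elements of $\mathbb{C}_q[W]$ are identified with vectors in $\ell^2(W)$ via $T_w\mapsto\delta_w$. $h_0=1$, $h_m=\sum_{|w|=m}T_w$. For $l\in\mathbb{N}_0$, $q_l$ is the projection onto $\mathrm{span}\{T_w:|w|=l\}$ and $\mathbb{C}_q^l[W]=q_l(\mathbb{C}_q[W])$. $S_l=\mathrm{span}\{q_l(h_1x),q_l(xh_1): x\in\mathbb{C}_q^{l-1}[W]\}$ and $\mathbb{C}_q^l[W]\ominus S_l$ is the orthogonal complement of $S_l$ in $\mathbb{C}_q^l[W]$ in $\ell^2(W)$. For $\gamma\in\mathbb{C}_q^l[W]$ and $m,n\in\mathbb{N}_0$, $\gamma_{m,n}=q_{m+n+l}(h_m\gamma h_n)$. *)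

theory Defs
  imports Complex_Main
begin

text \<open>Elements of W = (Z/2Z)^{*L} are represented by reduced words: lists over the
generators 0..L-1 with no two consecutive letters equal. The empty list is the identity,
and the word length is the list length.\<close>

definition reduced :: "nat \<Rightarrow> nat list \<Rightarrow> bool" where
  "reduced L w \<longleftrightarrow> set w \<subseteq> {..<L} \<and> (\<forall>i. Suc i < length w \<longrightarrow> w ! i \<noteq> w ! Suc i)"

text \<open>Elements of C_q[W], as finitely supported vectors in l^2(W) (T_w identified with delta_w).\<close>

definition hecke :: "nat \<Rightarrow> (nat list \<Rightarrow> complex) set" where
  "hecke L = {x. finite {w. x w \<noteq> 0} \<and> (\<forall>w. x w \<noteq> 0 \<longrightarrow> reduced L w)}"

definition pq :: "real \<Rightarrow> real" where
  "pq q = (q - 1) / q\<^sup>2"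

text \<open>Left multiplication by T_s: T_s T_w = T_{sw} if |sw| > |w|, and T_{sw} + p T_w otherwise.\<close>

definition lmul_gen :: "nat \<Rightarrow> real \<Rightarrow> nat \<Rightarrow> (nat list \<Rightarrow> complex) \<Rightarrow> (nat list \<Rightarrow> complex)" where
  "lmul_gen L q s x = (\<lambda>v. if reduced L v then
      (if v \<noteq> [] \<and> hd v = s then x (tl v) + complex_of_real (pq q) * x v else x (s # v))
    else 0)"

definition lmul_word :: "nat \<Rightarrow> real \<Rightarrow> nat list \<Rightarrow> (nat list \<Rightarrow> complex) \<Rightarrow> (nat list \<Rightarrow> complex)" where
  "lmul_word L q w x = foldr (lmul_gen L q) w x"

definition hmult :: "nat \<Rightarrow> real \<Rightarrow> (nat list \<Rightarrow> complex) \<Rightarrow> (nat list \<Rightarrow> complex) \<Rightarrow> (nat list \<Rightarrow> complex)" where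
  "hmult L q x y = (\<lambda>v. \<Sum>w\<in>{w. x w \<noteq> 0}. x w * lmul_word L q w y v)"

definition hsum :: "nat \<Rightarrow> nat \<Rightarrow> (nat list \<Rightarrow> complex)" where
  "hsum L m = (\<lambda>w. if reduced L w \<and> length w = m then 1 else 0)"

definition proj_len :: "nat \<Rightarrow> (nat list \<Rightarrow> complex) \<Rightarrow> (nat list \<Rightarrow> complex)" where
  "proj_len l x = (\<lambda>w. if length w = l then x w else 0)"

definition hecke_l :: "nat \<Rightarrow> nat \<Rightarrow> (nat list \<Rightarrow> complex) set" where
  "hecke_l L l = proj_len l ` hecke L"

definition l2_inner :: "(nat list \<Rightarrow> complex) \<Rightarrow> (nat list \<Rightarrow> complex) \<Rightarrow> complex" where
  "l2_inner x y = (\<Sum>w\<in>{w. x w \<noteq> 0}. x w * cnj (y w))"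

definition cspan :: "(nat list \<Rightarrow> complex) set \<Rightarrow> (nat list \<Rightarrow> complex) set" where
  "cspan A = {x. \<exists>t r. finite t \<and> t \<subseteq> A \<and> x = (\<lambda>v. \<Sum>a\<in>t. r a * a v)}"

definition S_sp :: "nat \<Rightarrow> real \<Rightarrow> nat \<Rightarrow> (nat list \<Rightarrow> complex) set" where
  "S_sp L q l = cspan ({proj_len l (hmult L q (hsum L 1) x) | x. x \<in> hecke_l L (l - 1)}
                   \<union> {proj_len l (hmult L q x (hsum L 1)) | x. x \<in> hecke_l L (l - 1)})"

definition ominus :: "(nat list \<Rightarrow> complex) set \<Rightarrow> (nat list \<Rightarrow> complex) set \<Rightarrow> (nat list \<Rightarrow> complex) set" where
  "ominus V A = {x \<in> V. \<forall>y\<in>A. l2_inner x y = 0}"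

definition gmn :: "nat \<Rightarrow> real \<Rightarrow> nat \<Rightarrow> (nat list \<Rightarrow> complex) \<Rightarrow> nat \<Rightarrow> nat \<Rightarrow> (nat list \<Rightarrow> complex)" where
  "gmn L q l g m n = proj_len (m + n + l) (hmult L q (hmult L q (hsum L m) g) (hsum L n))"

end

theory Submission
  imports Defs
begin
lemma reduced_succ: "reduced L w \<longleftrightarrow> set w \<subseteq> {..<L} \<and> successively (\<noteq>) w"
  unfolding reduced_def successively_conv_nth by simp

lemma reduced_Nil[simp]: "reduced L []" by (simp add: reduced_succ)

lemma reduced_Cons: "reduced L (s # w) \<longleftrightarrow> s < L \<and> reduced L w \<and> (w = [] \<or> s \<noteq> hd w)"
  by (auto simp: reduced_succ successively_Cons)

lemma reduced_append: "reduced L (u @ w) \<longleftrightarrow> reduced L u \<and> reduced L w \<and> (u = [] \<or> w = [] \<or> last u \<noteq> hd w)"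
  by (auto simp: reduced_succ successively_append_iff)

lemma reduced_rev[simp]: "reduced L (rev w) \<longleftrightarrow> reduced L w"
proof -
  have "successively (\<lambda>x y. y \<noteq> x) w = successively (\<noteq>) w"
    by (rule successively_cong) auto
  then show ?thesis by (auto simp: reduced_succ)
qed

lemma reduced_take: "reduced L w \<Longrightarrow> reduced L (take n w)"
  by (metis append_take_drop_id reduced_append)
lemma reduced_drop: "reduced L w \<Longrightarrow> reduced L (drop n w)"
  by (metis append_take_drop_id reduced_append)
lemma reduced_tl: "reduced L w \<Longrightarrow> reduced L (tl w)"
  by (metis drop_Suc drop_0 reduced_drop)
lemma reduced_butlast: "reduced L w \<Longrightarrow> reduced L (butlast w)"
  by (metis butlast_conv_take reduced_take)

definition rv :: "(nat list \<Rightarrow> complex) \<Rightarrow> (nat list \<Rightarrow> complex)" where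
  "rv x = (\<lambda>w. x (rev w))"
definition rho :: "nat \<Rightarrow> real \<Rightarrow> nat \<Rightarrow> (nat list \<Rightarrow> complex) \<Rightarrow> (nat list \<Rightarrow> complex)" where
  "rho L q t x = rv (lmul_gen L q t (rv x))"

lemma rv_rv[simp]: "rv (rv x) = x" by (simp add: rv_def)

lemma lmul_gen_expl: "lmul_gen L q s x v = (if reduced L v then
      (if v \<noteq> [] \<and> hd v = s then x (tl v) + complex_of_real (pq q) * x v else x (s # v)) else 0)"
  by (simp add: lmul_gen_def)

lemma rho_expl: "rho L q t x v = (if reduced L v then
      (if v \<noteq> [] \<and> last v = t then x (butlast v) + complex_of_real (pq q) * x v else x (v @ [t])) else 0)"
  by (simp add: rho_def rv_def lmul_gen_def hd_rev butlast_rev[symmetric])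

lemma commute_gen:
  assumes "s < L" "t < L"
  shows "lmul_gen L q s (rho L q t x) = rho L q t (lmul_gen L q s x)"
proof
  fix v
  show "lmul_gen L q s (rho L q t x) v = rho L q t (lmul_gen L q s x) v"
  proof (cases "reduced L v")
    case False then show ?thesis by (simp add: lmul_gen_expl rho_expl)
  next
    case red: True
    consider "v = []" | a where "v = [a]" | a w b where "v = a # w @ [b]"
      by (metis list.exhaust rev_exhaust append_Nil)
    then show ?thesis
    proof cases
      case 1 then show ?thesis using assms by (auto simp: lmul_gen_expl rho_expl reduced_Cons)
    next
      case 2 then show ?thesis using assms red by (auto simp: lmul_gen_expl rho_expl reduced_Cons algebra_simps)
    next
      case 3 then show ?thesis using assms red
        by (auto simp: lmul_gen_expl rho_expl reduced_Cons reduced_append butlast_append algebra_simps)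
    qed
  qed
qed

type_synonym vec = "nat list \<Rightarrow> complex"

definition lin :: "(vec \<Rightarrow> vec) \<Rightarrow> bool" where
  "lin f \<longleftrightarrow> (\<forall>x y. f (\<lambda>v. x v + y v) = (\<lambda>v. f x v + f y v)) \<and> (\<forall>c x. f (\<lambda>v. c * x v) = (\<lambda>v. c * f x v))"

lemma linD1: "lin f \<Longrightarrow> f (\<lambda>v. x v + y v) = (\<lambda>v. f x v + f y v)" by (simp add: lin_def)
lemma linD2: "lin f \<Longrightarrow> f (\<lambda>v. c * x v) = (\<lambda>v. c * f x v)" by (simp add: lin_def)
lemma lin_zero: "lin f \<Longrightarrow> f (\<lambda>v. 0) = (\<lambda>v. 0)"
  using linD2[of f 0 "\<lambda>v. 0"] by simp
lemma lin_sum: assumes "lin f" "finite I" shows "f (\<lambda>v. \<Sum>i\<in>I. g i v) = (\<lambda>v. \<Sum>i\<in>I. f (g i) v)"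
  using assms(2)
proof (induction I rule: finite_induct)
  case empty then show ?case by (simp add: lin_zero[OF assms(1)])
next
  case (insert a I)
  have "f (\<lambda>v. \<Sum>i\<in>insert a I. g i v) = f (\<lambda>v. g a v + (\<Sum>i\<in>I. g i v))"
    using insert by simp
  also have "\<dots> = (\<lambda>v. f (g a) v + f (\<lambda>v. \<Sum>i\<in>I. g i v) v)" by (rule linD1[OF assms(1)])
  finally show ?case using insert by simp
qed
lemma lin_diff: "lin f \<Longrightarrow> f (\<lambda>v. x v - y v) = (\<lambda>v. f x v - f y v)"
proof -
  assume l: "lin f"
  have "f (\<lambda>v. x v - y v) = f (\<lambda>v. x v + (-1) * y v)" by simp
  also have "\<dots> = (\<lambda>v. f x v + f (\<lambda>v. (-1) * y v) v)" by (rule linD1[OF l])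
  also have "\<dots> = (\<lambda>v. f x v - f y v)" using linD2[OF l, of "-1" y] by simp
  finally show ?thesis .
qed
lemma lin_comp: "lin f \<Longrightarrow> lin g \<Longrightarrow> lin (f \<circ> g)"
  by (simp add: lin_def)
lemma lin_id: "lin (\<lambda>x. x)" by (simp add: lin_def)
lemma lin_sumop: "finite I \<Longrightarrow> (\<And>u. u \<in> I \<Longrightarrow> lin (F u)) \<Longrightarrow> lin (\<lambda>y v. \<Sum>u\<in>I. F u y v)"
  unfolding lin_def by (auto simp: sum.distrib sum_distrib_left fun_eq_iff)

lemma lin_lmul_gen: "lin (lmul_gen L q s)"
  unfolding lin_def by (auto simp: lmul_gen_def fun_eq_iff algebra_simps)
lemma lin_rv: "lin rv" unfolding lin_def by (simp add: rv_def)
lemma lin_rho: "lin (rho L q t)"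
  unfolding lin_def rho_def by (simp add: rv_def lmul_gen_def fun_eq_iff algebra_simps)

definition lmw where "lmw L q u = lmul_word L q u"
definition rmw :: "nat \<Rightarrow> real \<Rightarrow> nat list \<Rightarrow> vec \<Rightarrow> vec" where "rmw L q u x = foldr (rho L q) u x"

lemma lmw_Nil[simp]: "lmw L q [] x = x" by (simp add: lmw_def lmul_word_def)
lemma lmw_Cons[simp]: "lmw L q (s # u) x = lmul_gen L q s (lmw L q u x)" by (simp add: lmw_def lmul_word_def)
lemma rmw_Nil[simp]: "rmw L q [] x = x" by (simp add: rmw_def)
lemma rmw_Cons[simp]: "rmw L q (s # u) x = rho L q s (rmw L q u x)" by (simp add: rmw_def)

lemma lin_lmw: "lin (lmw L q u)"
  by (induction u) (auto simp: lin_id intro: lin_comp[OF lin_lmul_gen, unfolded comp_def])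
lemma lin_rmw: "lin (rmw L q u)"
  by (induction u) (auto simp: lin_id intro: lin_comp[OF lin_rho, unfolded comp_def])

lemma lmw_rv: "lmw L q u (rv x) = rv (rmw L q u x)"
  by (induction u) (simp_all add: rho_def)
lemma rv_lmw_rv: "rv (lmw L q u (rv x)) = rmw L q u x"
  by (simp add: lmw_rv)

lemma lmw_rho: "set u \<subseteq> {..<L} \<Longrightarrow> t < L \<Longrightarrow> lmw L q u (rho L q t x) = rho L q t (lmw L q u x)"
  by (induction u) (auto simp: commute_gen)
lemma lmw_rmw: "set u \<subseteq> {..<L} \<Longrightarrow> set w \<subseteq> {..<L} \<Longrightarrow> lmw L q u (rmw L q w x) = rmw L q w (lmw L q u x)"
  by (induction w) (auto simp: lmw_rho)

definition Wd :: "nat \<Rightarrow> nat \<Rightarrow> nat list set" where "Wd L m = {w. reduced L w \<and> length w = m}"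

lemma finite_Wd: "finite (Wd L m)"
proof -
  have "Wd L m \<subseteq> {w. set w \<subseteq> {..<L} \<and> length w = m}" by (auto simp: Wd_def reduced_def)
  then show ?thesis using finite_lists_length_eq[of "{..<L}" m] finite_subset by blast
qed

lemma Wd_set: "w \<in> Wd L m \<Longrightarrow> set w \<subseteq> {..<L}" by (auto simp: Wd_def reduced_def)

definition Sop :: "nat \<Rightarrow> real \<Rightarrow> nat \<Rightarrow> vec \<Rightarrow> vec" where
  "Sop L q m y = (\<lambda>v. \<Sum>u\<in>Wd L m. lmw L q u y v)"
definition Rop :: "nat \<Rightarrow> real \<Rightarrow> nat \<Rightarrow> vec \<Rightarrow> vec" where
  "Rop L q m y = (\<lambda>v. \<Sum>u\<in>Wd L m. rmw L q u y v)"
definition Hop :: "nat \<Rightarrow> real \<Rightarrow> vec \<Rightarrow> vec" where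
  "Hop L q y = (\<lambda>v. \<Sum>s<L. lmul_gen L q s y v)"
definition Kop :: "nat \<Rightarrow> real \<Rightarrow> vec \<Rightarrow> vec" where
  "Kop L q y = (\<lambda>v. \<Sum>s<L. rho L q s y v)"

lemma lin_Sop: "lin (Sop L q m)"
  unfolding Sop_def by (rule lin_sumop[OF finite_Wd lin_lmw])
lemma lin_Rop: "lin (Rop L q m)"
  unfolding Rop_def by (rule lin_sumop[OF finite_Wd lin_rmw])
lemma lin_Hop: "lin (Hop L q)"
  unfolding Hop_def by (rule lin_sumop[OF finite_lessThan lin_lmul_gen])
lemma lin_Kop: "lin (Kop L q)"
  unfolding Kop_def by (rule lin_sumop[OF finite_lessThan lin_rho])

lemma Rop_rv: "Rop L q m y = rv (Sop L q m (rv y))"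
  by (simp add: Rop_def Sop_def rv_def fun_eq_iff rv_lmw_rv[symmetric])
lemma Kop_rv: "Kop L q y = rv (Hop L q (rv y))"
  by (simp add: Kop_def Hop_def rv_def rho_def fun_eq_iff)

lemma Hop_Rop: "Hop L q (Rop L q n y) = Rop L q n (Hop L q y)"
proof -
  have "Hop L q (Rop L q n y) = (\<lambda>v. \<Sum>s<L. \<Sum>u\<in>Wd L n. lmul_gen L q s (rmw L q u y) v)"
    unfolding Hop_def Rop_def by (simp add: lin_sum[OF lin_lmul_gen finite_Wd])
  also have "\<dots> = (\<lambda>v. \<Sum>s<L. \<Sum>u\<in>Wd L n. rmw L q u (lmul_gen L q s y) v)"
    using lmw_rmw[of "[s]" L u q y for s u] Wd_set by (intro ext sum.cong refl) auto
  also have "\<dots> = Rop L q n (Hop L q y)"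
    unfolding Hop_def Rop_def by (simp add: lin_sum[OF lin_rmw] sum.swap[of _ "{..<L}"])
  finally show ?thesis .
qed

lemma Kop_Sop: "Kop L q (Sop L q n y) = Sop L q n (Kop L q y)"
proof -
  have "Kop L q (Sop L q n y) = (\<lambda>v. \<Sum>s<L. \<Sum>u\<in>Wd L n. rho L q s (lmw L q u y) v)"
    unfolding Kop_def Sop_def by (simp add: lin_sum[OF lin_rho finite_Wd])
  also have "\<dots> = (\<lambda>v. \<Sum>s<L. \<Sum>u\<in>Wd L n. lmw L q u (rho L q s y) v)"
    using lmw_rho Wd_set by (intro ext sum.cong refl) auto
  also have "\<dots> = Sop L q n (Kop L q y)"
    unfolding Kop_def Sop_def by (simp add: lin_sum[OF lin_lmw] sum.swap[of _ "{..<L}"])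
  finally show ?thesis .
qed

definition good :: "nat \<Rightarrow> vec \<Rightarrow> bool" where
  "good L x \<longleftrightarrow> (\<forall>v. \<not> reduced L v \<longrightarrow> x v = 0)"
definition dl :: "nat list \<Rightarrow> vec" where "dl u = (\<lambda>v. if v = u then 1 else 0)"

lemma good_lmul_gen: "good L (lmul_gen L q s x)" by (simp add: good_def lmul_gen_def)
lemma good_lmw: "good L x \<Longrightarrow> good L (lmw L q u x)" by (cases u) (simp_all add: good_lmul_gen)
lemma good_rv: "good L x \<Longrightarrow> good L (rv x)" by (simp add: good_def rv_def)
lemma good_rho: "good L (rho L q t x)" by (simp add: good_def rho_expl)
lemma good_rmw: "good L x \<Longrightarrow> good L (rmw L q u x)" by (cases u) (simp_all add: good_rho)
lemma good_Sop: "good L y \<Longrightarrow> good L (Sop L q m y)"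
  using good_lmw[of L y q] by (simp add: good_def Sop_def)
lemma good_Rop: "good L y \<Longrightarrow> good L (Rop L q m y)"
  using good_rmw[of L y q] by (simp add: good_def Rop_def)
lemma good_Hop: "good L (Hop L q y)"
  using good_lmul_gen[of L q _ y] by (simp add: good_def Hop_def)
lemma good_Kop: "good L (Kop L q y)"
  using good_rho[of L q _ y] by (simp add: good_def Kop_def)
lemma good_hecke: "x \<in> hecke L \<Longrightarrow> good L x" by (auto simp: good_def hecke_def)

lemma quad:
  assumes "good L x" "s < L"
  shows "lmul_gen L q s (lmul_gen L q s x) = (\<lambda>v. x v + complex_of_real (pq q) * lmul_gen L q s x v)"
proof
  fix v
  show "lmul_gen L q s (lmul_gen L q s x) v = x v + complex_of_real (pq q) * lmul_gen L q s x v"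
  proof (cases "reduced L v")
    case False then show ?thesis using assms by (simp add: lmul_gen_expl good_def)
  next
    case True
    show ?thesis
    proof (cases "v \<noteq> [] \<and> hd v = s")
      case c: True
      then have v: "v = s # tl v" by (cases v) auto
      have "reduced L (tl v)" using True by (rule reduced_tl)
      moreover have "tl v = [] \<or> hd (tl v) \<noteq> s" using True v by (metis reduced_Cons)
      ultimately show ?thesis using True c v
        by (auto simp: lmul_gen_expl algebra_simps)
    next
      case c: False
      then have "reduced L (s # v)" using True assms(2) by (auto simp: reduced_Cons)
      then show ?thesis using True c by (auto simp: lmul_gen_expl)
    qed
  qed
qed

lemma lmw_delta: "reduced L u \<Longrightarrow> lmw L q u (dl []) = dl u"
proof (induction u)
  case Nil then show ?case by simp
next
  case (Cons s u)
  then have r: "reduced L u" "s < L" "u = [] \<or> s \<noteq> hd u" by (auto simp: reduced_Cons)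
  show ?case
  proof
    fix v
    show "lmw L q (s # u) (dl []) v = dl (s # u) v"
      using Cons r by (cases v) (auto simp: lmul_gen_expl dl_def reduced_Cons)
  qed
qed

lemma Wd_Suc_sum:
  "(\<Sum>u\<in>Wd L (Suc m). g u) = (\<Sum>w\<in>Wd L m. \<Sum>s<L. if reduced L (s # w) then g (s # w) else 0)"
proof -
  have "(\<Sum>w\<in>Wd L m. \<Sum>s<L. if reduced L (s # w) then g (s # w) else 0)
      = (\<Sum>w\<in>Wd L m. \<Sum>s\<in>{s\<in>{..<L}. reduced L (s # w)}. g (s # w))"
    by (rule sum.cong[OF refl]) (simp only: sum.inter_filter[OF finite_lessThan])
  also have "\<dots> = (\<Sum>(w, s)\<in>Sigma (Wd L m) (\<lambda>w. {s\<in>{..<L}. reduced L (s # w)}). g (s # w))"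
    by (rule sum.Sigma) (auto simp: finite_Wd)
  also have "\<dots> = (\<Sum>u\<in>(\<lambda>(w, s). s # w) ` Sigma (Wd L m) (\<lambda>w. {s\<in>{..<L}. reduced L (s # w)}). g u)"
    by (subst sum.reindex) (auto simp: inj_on_def case_prod_beta)
  also have "(\<lambda>(w, s). s # w) ` Sigma (Wd L m) (\<lambda>w. {s\<in>{..<L}. reduced L (s # w)}) = Wd L (Suc m)"
  proof (rule set_eqI)
    fix u
    show "u \<in> (\<lambda>(w, s). s # w) ` Sigma (Wd L m) (\<lambda>w. {s\<in>{..<L}. reduced L (s # w)}) \<longleftrightarrow> u \<in> Wd L (Suc m)"
    proof
      assume "u \<in> Wd L (Suc m)"
      then obtain s w where u: "u = s # w" by (cases u) (auto simp: Wd_def)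
      then show "u \<in> (\<lambda>(w, s). s # w) ` Sigma (Wd L m) (\<lambda>w. {s\<in>{..<L}. reduced L (s # w)})"
        using \<open>u \<in> Wd L (Suc m)\<close> by (auto simp: Wd_def reduced_Cons image_iff)
    qed (auto simp: Wd_def reduced_Cons)
  qed
  finally show ?thesis by simp
qed

lemma Wd_0: "Wd L 0 = {[]}" by (auto simp: Wd_def)

lemma Sop_0: "Sop L q 0 y = y" by (simp add: Sop_def Wd_0)
lemma Sop_1: "Sop L q (Suc 0) y = Hop L q y"
  by (simp add: Sop_def Hop_def Wd_Suc_sum Wd_0 reduced_Cons)
lemma Rop_0: "Rop L q 0 y = y" by (simp add: Rop_def Wd_0)
lemma Rop_1: "Rop L q (Suc 0) y = Kop L q y"
  by (simp add: Rop_def Kop_def Wd_Suc_sum Wd_0 reduced_Cons)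

definition cc :: "nat \<Rightarrow> nat \<Rightarrow> complex" where
  "cc L m = (if m = 0 then of_nat L else of_nat L - 1)"

lemma Sop_rec:
  assumes "good L y"
  shows "Sop L q (Suc (Suc m)) y = (\<lambda>v. Hop L q (Sop L q (Suc m) y) v
            - complex_of_real (pq q) * Sop L q (Suc m) y v - cc L m * Sop L q m y v)"
proof
  fix v
  let ?P = "complex_of_real (pq q)"
  have hd_u: "hd u < L \<and> u = hd u # tl u \<and> (\<forall>s<L. reduced L (s # u) \<longleftrightarrow> s \<noteq> hd u)" if "u \<in> Wd L (Suc m)" for u
    using that by (cases u) (auto simp: Wd_def reduced_Cons)
  have "Hop L q (Sop L q (Suc m) y) v = (\<Sum>s<L. \<Sum>u\<in>Wd L (Suc m). lmw L q (s # u) y v)"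
    unfolding Hop_def Sop_def by (simp add: lin_sum[OF lin_lmul_gen finite_Wd])
  also have "\<dots> = (\<Sum>u\<in>Wd L (Suc m). \<Sum>s<L. lmw L q (s # u) y v)" by (rule sum.swap)
  also have "\<dots> = (\<Sum>u\<in>Wd L (Suc m). (\<Sum>s<L. if reduced L (s # u) then lmw L q (s # u) y v else 0)
                      + (\<Sum>s<L. if s = hd u then lmw L q (s # u) y v else 0))"
  proof (intro sum.cong refl)
    fix u assume u: "u \<in> Wd L (Suc m)"
    have "\<And>s. s \<in> {..<L} \<Longrightarrow> lmw L q (s # u) y v = (if reduced L (s # u) then lmw L q (s # u) y v else 0)
                      + (if s = hd u then lmw L q (s # u) y v else 0)"
      using hd_u[OF u] by auto
    then show "(\<Sum>s<L. lmw L q (s # u) y v) = (\<Sum>s<L. if reduced L (s # u) then lmw L q (s # u) y v else 0)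
                      + (\<Sum>s<L. if s = hd u then lmw L q (s # u) y v else 0)"
      by (simp only: sum.distrib[symmetric]) (rule sum.cong, rule refl)
  qed
  also have "\<dots> = Sop L q (Suc (Suc m)) y v + (\<Sum>u\<in>Wd L (Suc m). lmw L q (hd u # u) y v)"
    by (simp add: sum.distrib Sop_def Wd_Suc_sum[where m="Suc m"] hd_u)
  also have "(\<Sum>u\<in>Wd L (Suc m). lmw L q (hd u # u) y v)
      = (\<Sum>u\<in>Wd L (Suc m). lmw L q (tl u) y v + ?P * lmw L q u y v)"
  proof (intro sum.cong refl)
    fix u assume u: "u \<in> Wd L (Suc m)"
    have "lmw L q (hd u # u) y = lmul_gen L q (hd u) (lmul_gen L q (hd u) (lmw L q (tl u) y))"
      using hd_u[OF u] by (metis lmw_Cons)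
    also have "\<dots> = (\<lambda>v. lmw L q (tl u) y v + ?P * lmul_gen L q (hd u) (lmw L q (tl u) y) v)"
      by (rule quad[OF good_lmw[OF assms]]) (use hd_u[OF u] in auto)
    also have "lmul_gen L q (hd u) (lmw L q (tl u) y) = lmw L q u y"
      using hd_u[OF u] by (metis lmw_Cons)
    finally show "lmw L q (hd u # u) y v = lmw L q (tl u) y v + ?P * lmw L q u y v" by simp
  qed
  also have "\<dots> = (\<Sum>u\<in>Wd L (Suc m). lmw L q (tl u) y v) + ?P * Sop L q (Suc m) y v"
    by (simp add: sum.distrib sum_distrib_left Sop_def)
  also have "(\<Sum>u\<in>Wd L (Suc m). lmw L q (tl u) y v) = cc L m * Sop L q m y v"
  proof -
    have "(\<Sum>u\<in>Wd L (Suc m). lmw L q (tl u) y v)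
        = (\<Sum>w\<in>Wd L m. \<Sum>s<L. if reduced L (s # w) then lmw L q w y v else 0)"
      by (simp add: Wd_Suc_sum cong: if_cong)
    also have "\<dots> = (\<Sum>w\<in>Wd L m. cc L m * lmw L q w y v)"
    proof (intro sum.cong refl)
      fix w assume w: "w \<in> Wd L m"
      have "(\<Sum>s<L. if reduced L (s # w) then lmw L q w y v else 0)
          = of_nat (card {s\<in>{..<L}. reduced L (s # w)}) * lmw L q w y v"
        by (simp add: sum.inter_filter[symmetric])
      also have "card {s\<in>{..<L}. reduced L (s # w)} = (if m = 0 then L else L - 1)"
      proof (cases m)
        case 0 then have "w = []" using w by (simp add: Wd_def)
        then show ?thesis using 0 by (simp add: reduced_Cons)
      next
        case (Suc k)
        then have "w \<noteq> []" "hd w < L" "reduced L w" using w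
          by (auto simp: Wd_def reduced_def) (metis hd_in_set subsetD lessThan_iff list.size(3) nat.distinct(1))
        then have "{s\<in>{..<L}. reduced L (s # w)} = {..<L} - {hd w}" by (auto simp: reduced_Cons)
        then show ?thesis using Suc \<open>hd w < L\<close> by simp
      qed
      also have "of_nat (if m = 0 then L else L - 1) = cc L m"
      proof (cases m)
        case (Suc k)
        then obtain w0 where "w0 \<in> Wd L m" using w by blast
        then have "L \<ge> 1" using w Suc
          by (cases w) (auto simp: Wd_def reduced_Cons)
        then show ?thesis using Suc by (simp add: cc_def of_nat_diff)
      qed (simp add: cc_def)
      finally show "(\<Sum>s<L. if reduced L (s # w) then lmw L q w y v else 0) = cc L m * lmw L q w y v" .
    qed
    also have "\<dots> = cc L m * Sop L q m y v" by (simp add: Sop_def sum_distrib_left)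
    finally show ?thesis .
  qed
  finally show "Sop L q (Suc (Suc m)) y v = Hop L q (Sop L q (Suc m) y) v - ?P * Sop L q (Suc m) y v - cc L m * Sop L q m y v"
    by simp
qed

lemma Rop_rec:
  assumes "good L y"
  shows "Rop L q (Suc (Suc m)) y = (\<lambda>v. Kop L q (Rop L q (Suc m) y) v
            - complex_of_real (pq q) * Rop L q (Suc m) y v - cc L m * Rop L q m y v)"
  using Sop_rec[OF good_rv[OF assms], of q m] by (simp add: Rop_rv Kop_rv rv_def)

lemma hmult_left: "hmult L q (hsum L m) y = Sop L q m y"
proof -
  have "{w. hsum L m w \<noteq> 0} = Wd L m" by (auto simp: hsum_def Wd_def)
  then show ?thesis by (simp add: hmult_def Sop_def lmw_def hsum_def Wd_def fun_eq_iff)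
qed

lemma hecke_lmul_gen: assumes "x \<in> hecke L" shows "lmul_gen L q s x \<in> hecke L"
proof -
  have fin: "finite {w. x w \<noteq> 0}" using assms by (simp add: hecke_def)
  have "{v. lmul_gen L q s x v \<noteq> 0} \<subseteq> {w. x w \<noteq> 0} \<union> tl ` {w. x w \<noteq> 0} \<union> (#) s ` {w. x w \<noteq> 0}"
  proof
    fix v assume "v \<in> {v. lmul_gen L q s x v \<noteq> 0}"
    then have h: "lmul_gen L q s x v \<noteq> 0" by simp
    show "v \<in> {w. x w \<noteq> 0} \<union> tl ` {w. x w \<noteq> 0} \<union> (#) s ` {w. x w \<noteq> 0}"
    proof (cases "v \<noteq> [] \<and> hd v = s")
      case True
      then have v: "v = s # tl v" by (cases v) auto
      have "x (tl v) + complex_of_real (pq q) * x v \<noteq> 0"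
        using h True unfolding lmul_gen_expl by (simp split: if_splits)
      then have "x (tl v) \<noteq> 0 \<or> x v \<noteq> 0" by auto
      then show ?thesis
      proof
        assume "x (tl v) \<noteq> 0"
        then have "s # tl v \<in> (#) s ` {w. x w \<noteq> 0}" by (intro imageI) simp
        then have "v \<in> (#) s ` {w. x w \<noteq> 0}" using v by simp
        then show ?thesis by (rule UnI2)
      qed blast
    next
      case False
      then have "x (s # v) \<noteq> 0" using h unfolding lmul_gen_expl by (simp split: if_splits)
      then have "v \<in> tl ` {w. x w \<noteq> 0}" by (intro image_eqI[of _ _ "s # v"]) simp_all
      then show ?thesis by (intro UnI1 UnI2)
    qed
  qed
  moreover have "finite ({w. x w \<noteq> 0} \<union> tl ` {w. x w \<noteq> 0} \<union> (#) s ` {w. x w \<noteq> 0})"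
    using fin by (intro finite_UnI finite_imageI)
  ultimately have "finite {v. lmul_gen L q s x v \<noteq> 0}" by (rule finite_subset)
  moreover have "\<forall>w. lmul_gen L q s x w \<noteq> 0 \<longrightarrow> reduced L w"
    using good_lmul_gen[of L q s x] by (auto simp: good_def)
  ultimately show ?thesis by (simp add: hecke_def)
qed

lemma hecke_lmw: "x \<in> hecke L \<Longrightarrow> lmw L q u x \<in> hecke L"
  by (induction u) (auto simp: hecke_lmul_gen)

lemma hecke_sum: assumes "finite I" "\<And>i. i \<in> I \<Longrightarrow> f i \<in> hecke L"
  shows "(\<lambda>v. \<Sum>i\<in>I. f i v) \<in> hecke L"
proof -
  have "{v. (\<Sum>i\<in>I. f i v) \<noteq> 0} \<subseteq> (\<Union>i\<in>I. {v. f i v \<noteq> 0})"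
    by (auto elim: sum.not_neutral_contains_not_neutral)
  moreover have "finite (\<Union>i\<in>I. {v. f i v \<noteq> 0})" using assms by (auto simp: hecke_def)
  ultimately have "finite {v. (\<Sum>i\<in>I. f i v) \<noteq> 0}" by (rule finite_subset)
  moreover have "\<forall>v. (\<Sum>i\<in>I. f i v) \<noteq> 0 \<longrightarrow> reduced L v"
    using assms by (auto simp: hecke_def elim: sum.not_neutral_contains_not_neutral)
  ultimately show ?thesis by (simp add: hecke_def)
qed

lemma hecke_Sop: "y \<in> hecke L \<Longrightarrow> Sop L q m y \<in> hecke L"
  unfolding Sop_def by (rule hecke_sum[OF finite_Wd hecke_lmw])

lemma rv_dl: "rv (dl []) = dl []" by (simp add: rv_def dl_def fun_eq_iff)

lemma Sop_dl: "Sop L q m (dl []) = hsum L m"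
proof
  fix v
  have "Sop L q m (dl []) v = (\<Sum>u\<in>Wd L m. dl u v)"
    unfolding Sop_def by (intro sum.cong refl) (simp add: lmw_delta Wd_def)
  also have "\<dots> = hsum L m v"
    using finite_Wd[of L m] by (simp add: dl_def hsum_def Wd_def eq_commute[of v])
  finally show "Sop L q m (dl []) v = hsum L m v" .
qed

lemma Rop_dl: "Rop L q m (dl []) = hsum L m"
  by (simp add: Rop_rv rv_dl Sop_dl) (simp add: rv_def hsum_def fun_eq_iff)

lemma lmw_Rop: "set x \<subseteq> {..<L} \<Longrightarrow> lmw L q x (Rop L q n z) = Rop L q n (lmw L q x z)"
  unfolding Rop_def by (simp add: lin_sum[OF lin_lmw finite_Wd] lmw_rmw Wd_set)

lemma hmult_right:
  assumes "X \<in> hecke L"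
  shows "hmult L q X (hsum L n) = Rop L q n X"
proof
  fix v
  let ?S = "{w. X w \<noteq> 0}"
  have fin: "finite ?S" and red: "\<And>w. w \<in> ?S \<Longrightarrow> reduced L w" using assms by (auto simp: hecke_def)
  have "hmult L q X (hsum L n) v = (\<Sum>x\<in>?S. X x * Rop L q n (dl x) v)"
    unfolding hmult_def
  proof (intro sum.cong refl)
    fix x assume x: "x \<in> ?S"
    have "lmul_word L q x (hsum L n) = lmw L q x (Rop L q n (dl []))" by (simp add: Rop_dl lmw_def)
    also have "\<dots> = Rop L q n (dl x)"
      using red[OF x] by (simp add: lmw_Rop reduced_def lmw_delta)
    finally show "X x * lmul_word L q x (hsum L n) v = X x * Rop L q n (dl x) v" by simp
  qed
  also have "\<dots> = Rop L q n (\<lambda>v. \<Sum>x\<in>?S. X x * dl x v) v"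
    by (simp add: lin_sum[OF lin_Rop fin] linD2[OF lin_Rop])
  also have "(\<lambda>v. \<Sum>x\<in>?S. X x * dl x v) = X"
  proof
    fix u
    have "(\<Sum>x\<in>?S. X x * dl x u) = (\<Sum>x\<in>?S. if x = u then X u else 0)"
      by (rule sum.cong) (auto simp: dl_def)
    also have "\<dots> = (if u \<in> ?S then X u else 0)" by (rule sum.delta[OF fin])
    also have "\<dots> = X u" by auto
    finally show "(\<Sum>x\<in>?S. X x * dl x u) = X u" .
  qed
  finally show "hmult L q X (hsum L n) v = Rop L q n X v" .
qed

lemma hmult_main: "y \<in> hecke L \<Longrightarrow> hmult L q (hmult L q (hsum L m) y) (hsum L n) = Rop L q n (Sop L q m y)"
  by (simp add: hmult_left hmult_right hecke_Sop)

fun Acoef :: "real \<Rightarrow> real \<Rightarrow> nat \<Rightarrow> nat \<Rightarrow> real" where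
  "Acoef P Lr 0 k = (if k = 0 then 1 else 0)"
| "Acoef P Lr (Suc 0) k = (if k = 1 then 1 else if k = 0 then P else 0)"
| "Acoef P Lr (Suc (Suc m)) k = (if k \<ge> 1 then Acoef P Lr (Suc m) (k - 1) else 0)
      + (Lr - 1) * Acoef P Lr (Suc m) (Suc k) - (if m = 0 then Lr else Lr - 1) * Acoef P Lr m k"

lemma Acoef_zero: "m < k \<Longrightarrow> Acoef P Lr m k = 0"
  by (induction P Lr m k rule: Acoef.induct) auto

lemma Acoef_top: "Acoef P Lr m m = 1"
proof (induction m rule: less_induct)
  case (less m)
  consider "m = 0" | "m = Suc 0" | k where "m = Suc (Suc k)" by (metis not0_implies_Suc)
  then show ?case
  proof cases
    case 3
    then show ?thesis using less.IH[of "Suc k"] by (simp add: Acoef_zero)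
  qed auto
qed

lemma shiftA: "(\<Sum>k\<le>N. (a::nat\<Rightarrow>complex) k * Y (Suc k) (v::nat list)) = (\<Sum>k\<le>Suc N. (if k \<ge> 1 then a (k - 1) else 0) * Y k v)"
  by (induction N) auto

lemma shiftB: "(\<Sum>k\<le>N. (if k \<ge> 1 then (a::nat\<Rightarrow>complex) k * Y (k - 1) (v::nat list) else 0)) = (\<Sum>k<N. a (Suc k) * Y k v)"
  by (induction N) auto

lemma sum_extend: "(\<And>k. (N::nat) < k \<Longrightarrow> a k = 0) \<Longrightarrow> N \<le> M \<Longrightarrow>
    (\<Sum>k\<le>N. a k * Y k (v::nat list)) = (\<Sum>k\<le>M. a k * (Y k v :: complex))"
  by (rule sum.mono_neutral_left) auto

lemma sum_extend_lt: "(\<And>k. (N::nat) \<le> k \<Longrightarrow> a k = 0) \<Longrightarrow> N \<le> M \<Longrightarrow>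
    (\<Sum>k<N. a k * Y k (v::nat list)) = (\<Sum>k\<le>M. a k * (Y k v :: complex))"
  by (rule sum.mono_neutral_left) auto

lemma Hh_step:
  fixes Hh :: "vec \<Rightarrow> vec" and Y :: "nat \<Rightarrow> vec" and a :: "nat \<Rightarrow> complex"
  assumes lin: "lin Hh"
    and HY: "\<And>k. Hh (Y k) = (\<lambda>v. Y (Suc k) v + P * Y k v + (if k \<ge> 1 then c * Y (k - 1) v else 0))"
    and z: "\<And>k. N < k \<Longrightarrow> a k = 0"
  shows "Hh (\<lambda>v. \<Sum>k\<le>N. a k * Y k v) = (\<lambda>v. \<Sum>k\<le>Suc N.
           ((if k \<ge> 1 then a (k - 1) else 0) + P * a k + c * a (Suc k)) * Y k v)"
proof
  fix v
  have "Hh (\<lambda>v. \<Sum>k\<le>N. a k * Y k v) v = (\<Sum>k\<le>N. a k * Hh (Y k) v)"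
    by (simp add: lin_sum[OF lin] linD2[OF lin])
  also have "\<dots> = (\<Sum>k\<le>N. a k * Y (Suc k) v) + (\<Sum>k\<le>N. (P * a k) * Y k v)
       + (\<Sum>k\<le>N. (if k \<ge> 1 then (c * a k) * Y (k - 1) v else 0))"
    by (simp add: HY sum.distrib[symmetric]) (intro sum.cong refl, auto simp: algebra_simps)
  also have "(\<Sum>k\<le>N. a k * Y (Suc k) v) = (\<Sum>k\<le>Suc N. (if k \<ge> 1 then a (k - 1) else 0) * Y k v)"
    by (rule shiftA)
  also have "(\<Sum>k\<le>N. (P * a k) * Y k v) = (\<Sum>k\<le>Suc N. (P * a k) * Y k v)"
    by (rule sum_extend) (auto simp: z)
  also have "(\<Sum>k\<le>N. (if k \<ge> 1 then (c * a k) * Y (k - 1) v else 0)) = (\<Sum>k<N. (c * a (Suc k)) * Y k v)"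
    by (rule shiftB)
  also have "\<dots> = (\<Sum>k\<le>Suc N. (c * a (Suc k)) * Y k v)"
    by (rule sum_extend_lt) (auto simp: z)
  finally show "Hh (\<lambda>v. \<Sum>k\<le>N. a k * Y k v) v = (\<Sum>k\<le>Suc N.
           ((if k \<ge> 1 then a (k - 1) else 0) + P * a k + c * a (Suc k)) * Y k v)"
    by (simp add: sum.distrib[symmetric] algebra_simps)
qed

lemma oneD:
  fixes Hh :: "vec \<Rightarrow> vec" and S :: "nat \<Rightarrow> vec" and Y :: "nat \<Rightarrow> vec"
  assumes lin: "lin Hh"
    and S0: "S 0 = Y 0"
    and S1: "S (Suc 0) = Hh (Y 0)"
    and Srec: "\<And>m. S (Suc (Suc m)) = (\<lambda>v. Hh (S (Suc m)) v - complex_of_real p * S (Suc m) v - cc L m * S m v)"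
    and HY: "\<And>k. Hh (Y k) = (\<lambda>v. Y (Suc k) v + complex_of_real p * Y k v + (if k \<ge> 1 then (of_nat L - 1) * Y (k - 1) v else 0))"
  shows "S m = (\<lambda>v. \<Sum>k\<le>m. complex_of_real (Acoef p (real L) m k) * Y k v)"
proof -
  let ?A = "\<lambda>m k. complex_of_real (Acoef p (real L) m k)"
  have "S m = (\<lambda>v. \<Sum>k\<le>m. ?A m k * Y k v) \<and> S (Suc m) = (\<lambda>v. \<Sum>k\<le>Suc m. ?A (Suc m) k * Y k v)"
  proof (induction m)
    case 0
    have "S (Suc 0) = (\<lambda>v. Y (Suc 0) v + complex_of_real p * Y 0 v)" using S1 HY[of 0] by simp
    then show ?case using S0 by (simp add: fun_eq_iff)
  next
    case (Suc m)
    have IH1: "S m = (\<lambda>v. \<Sum>k\<le>m. ?A m k * Y k v)" and IH2: "S (Suc m) = (\<lambda>v. \<Sum>k\<le>Suc m. ?A (Suc m) k * Y k v)"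
      using Suc by auto
    have "S (Suc (Suc m)) = (\<lambda>v. \<Sum>k\<le>Suc (Suc m). ?A (Suc (Suc m)) k * Y k v)"
    proof
      fix v
      have H0: "Hh (S (Suc m)) = (\<lambda>v. \<Sum>k\<le>Suc (Suc m).
           ((if k \<ge> 1 then ?A (Suc m) (k - 1) else 0) + complex_of_real p * ?A (Suc m) k
             + (of_nat L - 1) * ?A (Suc m) (Suc k)) * Y k v)"
        unfolding IH2 by (rule Hh_step[OF lin HY]) (simp add: Acoef_zero)
      have H: "Hh (S (Suc m)) v = (\<Sum>k\<le>Suc (Suc m).
           ((if k \<ge> 1 then ?A (Suc m) (k - 1) else 0) + complex_of_real p * ?A (Suc m) k
             + (of_nat L - 1) * ?A (Suc m) (Suc k)) * Y k v)"
        by (simp only: H0)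
      have B: "(\<Sum>k\<le>Suc m. ?A (Suc m) k * Y k v) = (\<Sum>k\<le>Suc (Suc m). ?A (Suc m) k * Y k v)"
        by (rule sum_extend) (auto simp: Acoef_zero)
      have C: "(\<Sum>k\<le>m. ?A m k * Y k v) = (\<Sum>k\<le>Suc (Suc m). ?A m k * Y k v)"
        by (rule sum_extend) (auto simp: Acoef_zero)
      have "S (Suc (Suc m)) v = Hh (S (Suc m)) v - complex_of_real p * S (Suc m) v - cc L m * S m v"
        using Srec by simp
      also have "\<dots> = (\<Sum>k\<le>Suc (Suc m).
           (((if k \<ge> 1 then ?A (Suc m) (k - 1) else 0) + complex_of_real p * ?A (Suc m) k
             + (of_nat L - 1) * ?A (Suc m) (Suc k)) - complex_of_real p * ?A (Suc m) k - cc L m * ?A m k) * Y k v)"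
      proof -
        have "Hh (S (Suc m)) v - complex_of_real p * S (Suc m) v - cc L m * S m v
          = (\<Sum>k\<le>Suc (Suc m).
           ((if k \<ge> 1 then ?A (Suc m) (k - 1) else 0) + complex_of_real p * ?A (Suc m) k
             + (of_nat L - 1) * ?A (Suc m) (Suc k)) * Y k v)
           - complex_of_real p * (\<Sum>k\<le>Suc (Suc m). ?A (Suc m) k * Y k v)
           - cc L m * (\<Sum>k\<le>Suc (Suc m). ?A m k * Y k v)"
          unfolding H by (simp only: IH1 IH2 B C)
        also have "\<dots> = (\<Sum>k\<le>Suc (Suc m).
           ((if k \<ge> 1 then ?A (Suc m) (k - 1) else 0) + complex_of_real p * ?A (Suc m) k
             + (of_nat L - 1) * ?A (Suc m) (Suc k)) * Y k v)
           - (\<Sum>k\<le>Suc (Suc m). (complex_of_real p * ?A (Suc m) k) * Y k v)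
           - (\<Sum>k\<le>Suc (Suc m). (cc L m * ?A m k) * Y k v)"
          by (simp only: sum_distrib_left mult.assoc)
        also have "\<dots> = (\<Sum>k\<le>Suc (Suc m).
           (((if k \<ge> 1 then ?A (Suc m) (k - 1) else 0) + complex_of_real p * ?A (Suc m) k
             + (of_nat L - 1) * ?A (Suc m) (Suc k)) - complex_of_real p * ?A (Suc m) k - cc L m * ?A m k) * Y k v)"
          by (simp only: left_diff_distrib sum_subtractf)
        finally show ?thesis .
      qed
      also have "\<dots> = (\<Sum>k\<le>Suc (Suc m). ?A (Suc (Suc m)) k * Y k v)"
        by (intro sum.cong refl) (auto simp: cc_def)
      finally show "S (Suc (Suc m)) v = (\<Sum>k\<le>Suc (Suc m). ?A (Suc (Suc m)) k * Y k v)" .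
    qed
    then show ?case using IH2 by simp
  qed
  then show ?thesis by simp
qed

definition Ev :: "nat \<Rightarrow> nat \<Rightarrow> vec \<Rightarrow> nat \<Rightarrow> nat \<Rightarrow> vec" where
  "Ev L l y k j = (\<lambda>w. if reduced L w \<and> length w = k + j + l then y (take l (drop k w)) else 0)"

lemma good_Ev: "good L (Ev L l y k j)" by (simp add: good_def Ev_def)

lemma Hop_good_expl:
  assumes "good L z" "reduced L v"
  shows "Hop L q z v = (if v \<noteq> [] then z (tl v) + complex_of_real (pq q) * z v else 0) + (\<Sum>s<L. z (s # v))"
proof -
  let ?P = "complex_of_real (pq q)"
  have "Hop L q z v = (\<Sum>s<L. (if v \<noteq> [] \<and> hd v = s then z (tl v) + ?P * z v else 0)
                          + (if v \<noteq> [] \<and> hd v = s then 0 else z (s # v)))"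
    unfolding Hop_def using assms(2) by (intro sum.cong refl) (simp add: lmul_gen_expl)
  also have "\<dots> = (\<Sum>s<L. (if v \<noteq> [] \<and> hd v = s then z (tl v) + ?P * z v else 0))
                  + (\<Sum>s<L. z (s # v))"
  proof -
    have "\<And>s. (if v \<noteq> [] \<and> hd v = s then 0 else z (s # v)) = z (s # v)"
    proof -
      fix s
      have "v \<noteq> [] \<and> hd v = s \<Longrightarrow> \<not> reduced L (s # v)" by (auto simp: reduced_Cons)
      then show "(if v \<noteq> [] \<and> hd v = s then 0 else z (s # v)) = z (s # v)"
        using assms(1) by (auto simp: good_def)
    qed
    then show ?thesis by (simp add: sum.distrib)
  qed
  also have "(\<Sum>s<L. (if v \<noteq> [] \<and> hd v = s then z (tl v) + ?P * z v else 0))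
      = (if v \<noteq> [] then z (tl v) + ?P * z v else 0)"
  proof (cases "v = []")
    case False
    then have "hd v < L" using assms(2) by (cases v) (auto simp: reduced_Cons)
    then show ?thesis using False by (simp add: sum.delta' eq_commute[of "hd v"])
  qed simp
  finally show ?thesis .
qed

lemma Ev_tl:
  assumes "reduced L v" "1 \<le> l"
  shows "(if v \<noteq> [] then Ev L l y k j (tl v) else 0) = Ev L l y (Suc k) j v"
proof (cases v)
  case Nil then show ?thesis by (simp add: Ev_def)
next
  case (Cons a w)
  then show ?thesis using assms by (auto simp: Ev_def reduced_Cons)
qed

lemma card_Cons_reduced:
  assumes "reduced L v" "v \<noteq> []"
  shows "card {s\<in>{..<L}. reduced L (s # v)} = L - 1"
proof -
  have "hd v < L" using assms by (cases v) (auto simp: reduced_Cons)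
  moreover have "{s\<in>{..<L}. reduced L (s # v)} = {..<L} - {hd v}" using assms by (auto simp: reduced_Cons)
  ultimately show ?thesis by simp
qed

lemma HE:
  assumes goody: "good L y" and len: "\<And>w. length w \<noteq> l \<Longrightarrow> y w = 0" and l1: "1 \<le> l"
    and ortL: "\<And>u. length u = l - 1 \<Longrightarrow> (\<Sum>s<L. y (s # u)) = 0"
  shows "Hop L q (Ev L l y k j) = (\<lambda>v. Ev L l y (Suc k) j v + complex_of_real (pq q) * Ev L l y k j v
     + (if k \<ge> 1 then (of_nat L - 1) * Ev L l y (k - 1) j v
        else if l = 1 \<and> j \<ge> 1 then - Ev L l y 0 (j - 1) v else 0))"
proof
  fix v
  let ?E = "Ev L l y"
  let ?P = "complex_of_real (pq q)"
  show "Hop L q (?E k j) v = ?E (Suc k) j v + ?P * ?E k j v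
     + (if k \<ge> 1 then (of_nat L - 1) * ?E (k - 1) j v
        else if l = 1 \<and> j \<ge> 1 then - ?E 0 (j - 1) v else 0)"
  proof (cases "reduced L v")
    case False
    then show ?thesis using good_Hop[of L q "?E k j"] by (simp add: good_def Ev_def)
  next
    case red: True
    have E0: "(if v \<noteq> [] then ?E k j (tl v) + ?P * ?E k j v else 0) = ?E (Suc k) j v + ?P * ?E k j v"
    proof (cases "v = []")
      case True then show ?thesis using l1 by (simp add: Ev_def)
    next
      case False then show ?thesis using Ev_tl[OF red l1, of y k j] by simp
    qed
    have S: "(\<Sum>s<L. ?E k j (s # v)) = (if k \<ge> 1 then (of_nat L - 1) * ?E (k - 1) j v
        else if l = 1 \<and> j \<ge> 1 then - ?E 0 (j - 1) v else 0)"
    proof (cases "Suc (length v) = k + j + l")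
      case False
      then show ?thesis by (auto simp: Ev_def)
    next
      case lenv: True
      show ?thesis
      proof (cases "k \<ge> 1")
        case True
        then have vne: "v \<noteq> []" using lenv l1 by auto
        have "(\<Sum>s<L. ?E k j (s # v)) = (\<Sum>s<L. if reduced L (s # v) then y (take l (drop (k - 1) v)) else 0)"
          using lenv True by (intro sum.cong refl) (auto simp: Ev_def drop_Cons')
        also have "\<dots> = of_nat (card {s\<in>{..<L}. reduced L (s # v)}) * y (take l (drop (k - 1) v))"
          by (simp add: sum.inter_filter[symmetric])
        also have "\<dots> = (of_nat L - 1) * ?E (k - 1) j v"
        proof -
          have "L \<ge> 1" using vne red by (cases v) (auto simp: reduced_Cons)
          then show ?thesis using card_Cons_reduced[OF red vne] lenv True red
            by (simp add: Ev_def of_nat_diff; arith)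
        qed
        finally show ?thesis using True by simp
      next
        case False
        then have k0: "k = 0" by simp
        have Ek: "?E k j (s # v) = (if reduced L (s # v) then y (s # take (l - 1) v) else 0)" for s
          using lenv k0 l1 red by (auto simp: Ev_def take_Cons')
        show ?thesis
        proof (cases "l = 1")
          case l2: False
          have "?E k j (s # v) = y (s # take (l - 1) v)" if sL: "s < L" for s
          proof -
            have "\<not> reduced L (s # v) \<Longrightarrow> y (s # take (l - 1) v) = 0"
            proof -
              assume nr: "\<not> reduced L (s # v)"
              have "length v \<ge> 1" using lenv l2 l1 by simp
              then have "v \<noteq> []" by auto
              then have "s = hd v" using nr red sL by (auto simp: reduced_Cons)
              moreover have "take (l - 1) v \<noteq> []" using \<open>v \<noteq> []\<close> l1 l2 by simp
              moreover have "hd (take (l - 1) v) = hd v" using \<open>v \<noteq> []\<close> l1 l2 by (cases v) auto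
              ultimately have "\<not> reduced L (s # take (l - 1) v)" by (simp add: reduced_Cons)
              then show ?thesis using goody by (simp add: good_def)
            qed
            then show ?thesis using Ek by auto
          qed
          then have "(\<Sum>s<L. ?E k j (s # v)) = (\<Sum>s<L. y (s # take (l - 1) v))" by (intro sum.cong refl) simp
          also have "\<dots> = 0" using ortL lenv by simp
          finally show ?thesis using k0 l2 by simp
        next
          case l1': True
          have "(\<Sum>s<L. ?E k j (s # v)) = (\<Sum>s<L. if reduced L (s # v) then y [s] else 0)"
            using Ek l1' by (simp cong: if_cong)
          also have "\<dots> = (\<Sum>s<L. y [s]) - (if v \<noteq> [] then y [hd v] else 0)"
          proof (cases "v = []")
            case True then show ?thesis by (simp add: reduced_Cons)
          next
            case False
            then have hv: "hd v < L" using red by (cases v) (auto simp: reduced_Cons)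
            have "(\<Sum>s<L. y [s]) = (\<Sum>s<L. (if reduced L (s # v) then y [s] else 0) + (if s = hd v then y [s] else 0))"
              using False red by (intro sum.cong refl) (auto simp: reduced_Cons)
            also have "\<dots> = (\<Sum>s<L. if reduced L (s # v) then y [s] else 0) + y [hd v]"
              using hv by (simp add: sum.distrib)
            finally show ?thesis using False by simp
          qed
          also have "(\<Sum>s<L. y [s]) = 0" using ortL[of "[]"] l1' by simp
          also have "(0::complex) - (if v \<noteq> [] then y [hd v] else 0) = (if j \<ge> 1 then - ?E 0 (j - 1) v else 0)"
          proof (cases "v = []")
            case False
            then have "take 1 v = [hd v]" by (cases v) auto
            then show ?thesis using False lenv l1' k0 red by (cases v) (auto simp: Ev_def)
          qed (use lenv l1' k0 in simp)
          finally show ?thesis using k0 l1' by simp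
        qed
      qed
    qed
    show ?thesis using Hop_good_expl[OF good_Ev red] E0 S by simp
  qed
qed

lemma rev_take_drop:
  assumes "length w = k + j + l"
  shows "rev (take l (drop j w)) = take l (drop k (rev w))"
  using assms by (simp add: rev_take rev_drop drop_take min_def)

lemma rv_Ev: "rv (Ev L l y k j) = Ev L l (rv y) j k"
  by (auto simp: rv_def Ev_def fun_eq_iff rev_take_drop add.commute add.left_commute)

lemma KE:
  assumes goody: "good L y" and len: "\<And>w. length w \<noteq> l \<Longrightarrow> y w = 0" and l1: "1 \<le> l"
    and ortR: "\<And>u. length u = l - 1 \<Longrightarrow> (\<Sum>s<L. y (u @ [s])) = 0"
  shows "Kop L q (Ev L l y k j) = (\<lambda>v. Ev L l y k (Suc j) v + complex_of_real (pq q) * Ev L l y k j v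
     + (if j \<ge> 1 then (of_nat L - 1) * Ev L l y k (j - 1) v
        else if l = 1 \<and> k \<ge> 1 then - Ev L l y (k - 1) 0 v else 0))"
proof -
  have g: "good L (rv y)" using goody by (rule good_rv)
  have le: "\<And>w. length w \<noteq> l \<Longrightarrow> rv y w = 0" using len by (simp add: rv_def)
  have oL: "\<And>u. length u = l - 1 \<Longrightarrow> (\<Sum>s<L. rv y (s # u)) = 0"
    using ortR by (simp add: rv_def)
  have "Kop L q (Ev L l y k j) = rv (Hop L q (Ev L l (rv y) j k))"
    by (simp add: Kop_rv rv_Ev)
  also have "\<dots> = rv (\<lambda>v. Ev L l (rv y) (Suc j) k v + complex_of_real (pq q) * Ev L l (rv y) j k v
     + (if j \<ge> 1 then (of_nat L - 1) * Ev L l (rv y) (j - 1) k v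
        else if l = 1 \<and> k \<ge> 1 then - Ev L l (rv y) 0 (k - 1) v else 0))"
    by (rule arg_cong[where f=rv], rule HE[OF g le l1 oL])
  also have "\<dots> = (\<lambda>v. Ev L l y k (Suc j) v + complex_of_real (pq q) * Ev L l y k j v
     + (if j \<ge> 1 then (of_nat L - 1) * Ev L l y k (j - 1) v
        else if l = 1 \<and> k \<ge> 1 then - Ev L l y (k - 1) 0 v else 0))"
  proof -
    have e: "\<And>l' a b w. Ev L l' (rv y) a b (rev w) = Ev L l' y b a w"
      by (metis rv_Ev rv_rv rv_def)
    then have e2: "\<And>l' a b w. Ev L l' (\<lambda>w. y (rev w)) a b (rev w) = Ev L l' y b a w"
      by (simp add: rv_def)
    show ?thesis by (simp add: rv_def e2 cong: if_cong)
  qed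
  finally show ?thesis .
qed

lemma cspan_incl: "a \<in> A \<Longrightarrow> a \<in> cspan A"
  unfolding cspan_def by (rule CollectI, rule exI[of _ "{a}"], rule exI[of _ "\<lambda>_. 1"]) simp

lemma dl_hecke: "reduced L u \<Longrightarrow> dl u \<in> hecke L"
proof -
  assume "reduced L u"
  moreover have "{w. dl u w \<noteq> 0} = {u}" by (auto simp: dl_def)
  ultimately show ?thesis by (auto simp: hecke_def dl_def)
qed

lemma dl_hecke_l: "reduced L u \<Longrightarrow> length u = n \<Longrightarrow> dl u \<in> hecke_l L n"
proof -
  assume a: "reduced L u" "length u = n"
  have "dl u = proj_len n (dl u)" using a by (auto simp: proj_len_def dl_def fun_eq_iff)
  then show ?thesis using dl_hecke[OF a(1)] unfolding hecke_l_def by blast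
qed

lemma Hop_dl:
  assumes "reduced L u" "reduced L w" "length w = Suc (length u)"
  shows "Hop L q (dl u) w = (if w \<noteq> [] \<and> tl w = u then 1 else 0)"
proof -
  have g: "good L (dl u)" using assms(1) by (auto simp: good_def dl_def)
  have a: "\<And>s. dl u (s # w) = 0" "dl u w = 0" using assms(3) by (auto simp: dl_def)
  show ?thesis using Hop_good_expl[OF g assms(2), of q] by (auto simp: a) (auto simp: dl_def)
qed

lemma sum_supp_ind:
  assumes "finite S" "finite B" "\<And>w. w \<notin> S \<Longrightarrow> (y w :: complex) = 0"
  shows "(\<Sum>w\<in>S. y w * (if w \<in> B then 1 else 0)) = (\<Sum>w\<in>B. y w)"
proof -
  have "(\<Sum>w\<in>S. y w * (if w \<in> B then 1 else 0)) = (\<Sum>w\<in>S. if w \<in> B then y w else 0)"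
    by (intro sum.cong refl) auto
  also have "\<dots> = (\<Sum>w\<in>S \<inter> B. y w)" by (simp add: sum.inter_restrict[OF assms(1)])
  also have "\<dots> = (\<Sum>w\<in>B. y w)"
    by (rule sum.mono_neutral_left) (use assms in auto)
  finally show ?thesis .
qed

lemma ort_facts:
  assumes y: "y \<in> ominus (hecke_l L l) (S_sp L q l)" and l1: "1 \<le> l"
  shows "y \<in> hecke L" "good L y" "\<And>w. length w \<noteq> l \<Longrightarrow> y w = 0"
    "\<And>u. length u = l - 1 \<Longrightarrow> (\<Sum>s<L. y (s # u)) = 0"
    "\<And>u. length u = l - 1 \<Longrightarrow> (\<Sum>s<L. y (u @ [s])) = 0"
proof -
  obtain x where x: "x \<in> hecke L" "y = proj_len l x" using y by (auto simp: ominus_def hecke_l_def)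
  have orth: "\<And>z. z \<in> S_sp L q l \<Longrightarrow> l2_inner y z = 0" using y by (auto simp: ominus_def)
  have fx: "finite {w. x w \<noteq> 0}" using x by (simp add: hecke_def)
  have supp: "{w. y w \<noteq> 0} \<subseteq> {w. x w \<noteq> 0}" using x by (auto simp: proj_len_def)
  have fin: "finite {w. y w \<noteq> 0}" using finite_subset[OF supp fx] .
  show yh: "y \<in> hecke L" using x fin by (auto simp: hecke_def proj_len_def)
  show gy: "good L y" using yh by (rule good_hecke)
  show len: "\<And>w. length w \<noteq> l \<Longrightarrow> y w = 0" using x by (simp add: proj_len_def)
  let ?S = "{w. y w \<noteq> 0}"
  show "(\<Sum>s<L. y (s # u)) = 0" if lu: "length u = l - 1" for u
  proof (cases "reduced L u")
    case False
    then have "\<And>s. \<not> reduced L (s # u)" by (auto simp: reduced_Cons)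
    then show ?thesis using gy by (simp add: good_def)
  next
    case ru: True
    let ?z = "proj_len l (hmult L q (hsum L 1) (dl u))"
    have "?z \<in> S_sp L q l" unfolding S_sp_def
      by (rule cspan_incl) (use dl_hecke_l[OF ru lu] in blast)
    then have 0: "l2_inner y ?z = 0" by (rule orth)
    let ?B = "(\<lambda>s. s # u) ` {..<L}"
    have zw: "cnj (?z w) = (if w \<in> ?B then 1 else 0)" if "y w \<noteq> 0" for w
    proof -
      have rw: "reduced L w" and lw: "length w = l" using that gy len by (auto simp: good_def)
      have "?z w = Hop L q (dl u) w" using lw by (simp add: proj_len_def hmult_left Sop_1)
      also have "\<dots> = (if w \<noteq> [] \<and> tl w = u then 1 else 0)"
        by (rule Hop_dl[OF ru rw]) (use lw lu l1 in simp)
      also have "(w \<noteq> [] \<and> tl w = u) \<longleftrightarrow> w \<in> ?B"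
      proof
        assume "w \<noteq> [] \<and> tl w = u"
        then have "w = hd w # u" "hd w < L" using rw by (cases w; auto simp: reduced_Cons)+
        then show "w \<in> ?B" by (intro image_eqI[of _ _ "hd w"]) auto
      qed auto
      finally show ?thesis by simp
    qed
    have "l2_inner y ?z = (\<Sum>w\<in>?S. y w * (if w \<in> ?B then 1 else 0))"
      unfolding l2_inner_def by (rule sum.cong[OF refl], subst zw, auto)
    also have "\<dots> = (\<Sum>w\<in>?B. y w)" by (rule sum_supp_ind[OF fin]) auto
    also have "\<dots> = (\<Sum>s<L. y (s # u))" by (subst sum.reindex) (auto simp: inj_on_def)
    finally show ?thesis using 0 by simp
  qed
  show "(\<Sum>s<L. y (u @ [s])) = 0" if lu: "length u = l - 1" for u
  proof (cases "reduced L u")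
    case False
    then have "\<And>s. \<not> reduced L (u @ [s])" by (auto simp: reduced_append)
    then show ?thesis using gy by (simp add: good_def)
  next
    case ru: True
    let ?z = "proj_len l (hmult L q (dl u) (hsum L 1))"
    have "?z \<in> S_sp L q l" unfolding S_sp_def
      by (rule cspan_incl) (use dl_hecke_l[OF ru lu] in blast)
    then have 0: "l2_inner y ?z = 0" by (rule orth)
    let ?B = "(\<lambda>s. u @ [s]) ` {..<L}"
    have rru: "reduced L (rev u)" using ru by simp
    have zw: "cnj (?z w) = (if w \<in> ?B then 1 else 0)" if "y w \<noteq> 0" for w
    proof -
      have rw: "reduced L w" and lw: "length w = l" using that gy len by (auto simp: good_def)
      have hm: "hmult L q (dl u) (hsum L 1) = Kop L q (dl u)"
        by (simp add: hmult_right[OF dl_hecke[OF ru]] Rop_1)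
      have rvd: "rv (dl u) = dl (rev u)" by (auto simp: rv_def dl_def fun_eq_iff)
      have "?z w = Hop L q (dl (rev u)) (rev w)" using lw
        unfolding proj_len_def hm Kop_rv rvd by (simp add: rv_def)
      also have "\<dots> = (if rev w \<noteq> [] \<and> tl (rev w) = rev u then 1 else 0)"
        by (rule Hop_dl[OF rru]) (use lw lu l1 rw in simp_all)
      also have "(rev w \<noteq> [] \<and> tl (rev w) = rev u) \<longleftrightarrow> w \<in> ?B"
      proof
        assume a: "rev w \<noteq> [] \<and> tl (rev w) = rev u"
        then have "rev w = hd (rev w) # rev u" by (cases "rev w") auto
        then have "rev (rev w) = rev (hd (rev w) # rev u)" by (rule arg_cong)
        then have "w = u @ [hd (rev w)]" by simp
        moreover have "hd (rev w) < L" using a rw by (auto simp: reduced_def hd_rev dest: last_in_set)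
        ultimately show "w \<in> ?B" by (intro image_eqI[of _ _ "hd (rev w)"]) auto
      qed auto
      finally show ?thesis by simp
    qed
    have "l2_inner y ?z = (\<Sum>w\<in>?S. y w * (if w \<in> ?B then 1 else 0))"
      unfolding l2_inner_def by (rule sum.cong[OF refl], subst zw, auto)
    also have "\<dots> = (\<Sum>w\<in>?B. y w)" by (rule sum_supp_ind[OF fin]) auto
    also have "\<dots> = (\<Sum>s<L. y (u @ [s]))" by (subst sum.reindex) (auto simp: inj_on_def)
    finally show ?thesis using 0 by simp
  qed
qed

definition adm :: "nat \<Rightarrow> nat \<Rightarrow> vec \<Rightarrow> bool" where
  "adm L l y \<longleftrightarrow> good L y \<and> (\<forall>w. length w \<noteq> l \<longrightarrow> y w = 0)
     \<and> (\<forall>u. length u = l - 1 \<longrightarrow> (\<Sum>s<L. y (s # u)) = 0)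
     \<and> (\<forall>u. length u = l - 1 \<longrightarrow> (\<Sum>s<L. y (u @ [s])) = 0)"

lemma HE': "adm L l y \<Longrightarrow> 1 \<le> l \<Longrightarrow> Hop L q (Ev L l y k j) = (\<lambda>v. Ev L l y (Suc k) j v + complex_of_real (pq q) * Ev L l y k j v
     + (if k \<ge> 1 then (of_nat L - 1) * Ev L l y (k - 1) j v
        else if l = 1 \<and> j \<ge> 1 then - Ev L l y 0 (j - 1) v else 0))"
  by (rule HE) (auto simp: adm_def)

lemma KE': "adm L l y \<Longrightarrow> 1 \<le> l \<Longrightarrow> Kop L q (Ev L l y k j) = (\<lambda>v. Ev L l y k (Suc j) v + complex_of_real (pq q) * Ev L l y k j v
     + (if j \<ge> 1 then (of_nat L - 1) * Ev L l y k (j - 1) v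
        else if l = 1 \<and> k \<ge> 1 then - Ev L l y (k - 1) 0 v else 0))"
  by (rule KE) (auto simp: adm_def)

fun Fv :: "nat \<Rightarrow> vec \<Rightarrow> nat \<Rightarrow> nat \<Rightarrow> vec" where
  "Fv L y 0 j = Ev L 1 y 0 j"
| "Fv L y (Suc k) 0 = Ev L 1 y (Suc k) 0"
| "Fv L y (Suc k) (Suc j) = (\<lambda>v. Ev L 1 y (Suc k) (Suc j) v - Fv L y k j v)"

lemma good_Fv: "good L (Fv L y k j)"
  by (induction L y k j rule: Fv.induct) (auto simp: Ev_def good_def)

lemma HF:
  "adm L 1 y \<Longrightarrow> Hop L q (Fv L y k j) = (\<lambda>v. Fv L y (Suc k) j v + complex_of_real (pq q) * Fv L y k j v
     + (if k \<ge> 1 then (of_nat L - 1) * Fv L y (k - 1) j v else 0))"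
proof (induction L y k j rule: Fv.induct)
  case (1 L y j)
  show ?case using HE'[OF 1, of q 0 j] by (cases j) (auto simp: fun_eq_iff)
next
  case (2 L y k)
  show ?case using HE'[OF 2, of q "Suc k" 0] by (cases k) (auto simp: fun_eq_iff)
next
  case (3 L y k j)
  show ?case
  proof
    fix v
    have D: "Hop L q (Fv L y (Suc k) (Suc j)) v = Hop L q (Ev L 1 y (Suc k) (Suc j)) v - Hop L q (Fv L y k j) v"
      by (simp only: Fv.simps lin_diff[OF lin_Hop])
    have h2: "Hop L q (Ev L 1 y (Suc k) (Suc j)) v = Ev L 1 y (Suc (Suc k)) (Suc j) v
        + complex_of_real (pq q) * Ev L 1 y (Suc k) (Suc j) v + (of_nat L - 1) * Ev L 1 y k (Suc j) v"
      using HE'[OF 3(2), of q "Suc k" "Suc j"] by (simp add: fun_eq_iff)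
    have h3: "Hop L q (Fv L y k j) v = Fv L y (Suc k) j v + complex_of_real (pq q) * Fv L y k j v
     + (if k \<ge> 1 then (of_nat L - 1) * Fv L y (k - 1) j v else 0)"
      by (simp only: 3(1)[OF 3(2)])
    show "Hop L q (Fv L y (Suc k) (Suc j)) v = Fv L y (Suc (Suc k)) (Suc j) v + complex_of_real (pq q) * Fv L y (Suc k) (Suc j) v
     + (if Suc k \<ge> 1 then (of_nat L - 1) * Fv L y (Suc k - 1) (Suc j) v else 0)"
      unfolding D h2 h3 by (cases k) (simp_all add: algebra_simps)
  qed
qed

lemma KF:
  "adm L 1 y \<Longrightarrow> Kop L q (Fv L y k j) = (\<lambda>v. Fv L y k (Suc j) v + complex_of_real (pq q) * Fv L y k j v
     + (if j \<ge> 1 then (of_nat L - 1) * Fv L y k (j - 1) v else 0))"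
proof (induction L y k j rule: Fv.induct)
  case (1 L y j)
  show ?case using KE'[OF 1, of q 0 j] by (cases j) (auto simp: fun_eq_iff)
next
  case (2 L y k)
  show ?case using KE'[OF 2, of q "Suc k" 0] by (cases k) (auto simp: fun_eq_iff)
next
  case (3 L y k j)
  show ?case
  proof
    fix v
    have D: "Kop L q (Fv L y (Suc k) (Suc j)) v = Kop L q (Ev L 1 y (Suc k) (Suc j)) v - Kop L q (Fv L y k j) v"
      by (simp only: Fv.simps lin_diff[OF lin_Kop])
    have h2: "Kop L q (Ev L 1 y (Suc k) (Suc j)) v = Ev L 1 y (Suc k) (Suc (Suc j)) v
        + complex_of_real (pq q) * Ev L 1 y (Suc k) (Suc j) v + (of_nat L - 1) * Ev L 1 y (Suc k) j v"
      using KE'[OF 3(2), of q "Suc k" "Suc j"] by (simp add: fun_eq_iff)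
    have h3: "Kop L q (Fv L y k j) v = Fv L y k (Suc j) v + complex_of_real (pq q) * Fv L y k j v
     + (if j \<ge> 1 then (of_nat L - 1) * Fv L y k (j - 1) v else 0)"
      by (simp only: 3(1)[OF 3(2)])
    show "Kop L q (Fv L y (Suc k) (Suc j)) v = Fv L y (Suc k) (Suc (Suc j)) v + complex_of_real (pq q) * Fv L y (Suc k) (Suc j) v
     + (if Suc j \<ge> 1 then (of_nat L - 1) * Fv L y (Suc k) (Suc j - 1) v else 0)"
      unfolding D h2 h3 by (cases j) (simp_all add: algebra_simps)
  qed
qed

lemma twoD:
  fixes X :: "nat \<Rightarrow> nat \<Rightarrow> vec"
  assumes HX: "\<And>k j. Hop L q (X k j) = (\<lambda>v. X (Suc k) j v + complex_of_real (pq q) * X k j v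
       + (if k \<ge> 1 then (of_nat L - 1) * X (k - 1) j v else 0))"
    and KX: "\<And>k j. Kop L q (X k j) = (\<lambda>v. X k (Suc j) v + complex_of_real (pq q) * X k j v
       + (if j \<ge> 1 then (of_nat L - 1) * X k (j - 1) v else 0))"
    and gX: "\<And>k j. good L (X k j)"
  shows "Rop L q n (Sop L q m (X 0 0)) = (\<lambda>v. \<Sum>k\<le>m. \<Sum>j\<le>n.
            complex_of_real (Acoef (pq q) (real L) m k * Acoef (pq q) (real L) n j) * X k j v)"
proof -
  let ?A = "Acoef (pq q) (real L)"
  let ?Z = "\<lambda>j. Sop L q m (X 0 j)"
  have Z: "?Z j = (\<lambda>v. \<Sum>k\<le>m. complex_of_real (?A m k) * X k j v)" for j
    by (rule oneD[where Hh = "Hop L q" and S = "\<lambda>m. Sop L q m (X 0 j)" and Y = "\<lambda>k. X k j"])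
       (simp_all add: lin_Hop Sop_0 Sop_1 Sop_rec[OF gX] HX)
  have KZ: "Kop L q (?Z j) = (\<lambda>v. ?Z (Suc j) v + complex_of_real (pq q) * ?Z j v
       + (if j \<ge> 1 then (of_nat L - 1) * ?Z (j - 1) v else 0))" for j
  proof -
    have "Kop L q (?Z j) = Sop L q m (Kop L q (X 0 j))" by (rule Kop_Sop)
    also have "\<dots> = (\<lambda>v. ?Z (Suc j) v + complex_of_real (pq q) * ?Z j v
       + (if j \<ge> 1 then (of_nat L - 1) * ?Z (j - 1) v else 0))"
      unfolding KX by (cases j) (simp_all add: linD1[OF lin_Sop] linD2[OF lin_Sop])
    finally show ?thesis .
  qed
  have R: "Rop L q n (?Z 0) = (\<lambda>v. \<Sum>j\<le>n. complex_of_real (?A n j) * ?Z j v)"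
    by (rule oneD[where Hh = "Kop L q" and S = "\<lambda>n. Rop L q n (?Z 0)" and Y = ?Z])
       (simp_all add: lin_Kop Rop_0 Rop_1 Rop_rec[OF good_Sop[OF gX]] KZ)
  show ?thesis
  proof
    fix v
    have "Rop L q n (Sop L q m (X 0 0)) v = (\<Sum>j\<le>n. complex_of_real (?A n j) * (\<Sum>k\<le>m. complex_of_real (?A m k) * X k j v))"
      using R by (simp add: Z)
    also have "\<dots> = (\<Sum>k\<le>m. \<Sum>j\<le>n. complex_of_real (?A m k * ?A n j) * X k j v)"
      by (simp add: sum_distrib_left sum.swap[of _ "{..m}"] mult_ac)
    finally show "Rop L q n (Sop L q m (X 0 0)) v = (\<Sum>k\<le>m. \<Sum>j\<le>n.
            complex_of_real (?A m k * ?A n j) * X k j v)" .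
  qed
qed

lemma Ev00: "adm L l y \<Longrightarrow> Ev L l y 0 0 = y"
  by (auto simp: Ev_def adm_def good_def fun_eq_iff)

lemma Ev_len: "length v \<noteq> k + j + l \<Longrightarrow> Ev L l y k j v = 0"
  by (simp add: Ev_def)

lemma Fv_len: "k + j + 1 < length v \<Longrightarrow> Fv L y k j v = 0"
  by (induction L y k j rule: Fv.induct) (auto simp: Ev_def)

lemma Fv_top: "length v = k + j + 1 \<Longrightarrow> Fv L y k j v = Ev L 1 y k j v"
  by (induction L y k j rule: Fv.induct) (auto simp: Fv_len)

lemma proj_delta:
  fixes m n :: nat
  assumes "\<And>k' j'. k' \<le> m \<Longrightarrow> j' \<le> n \<Longrightarrow> (k', j') \<noteq> (m, n) \<Longrightarrow> Z k' j' = (0::complex)"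
  shows "(\<Sum>k'\<le>m. \<Sum>j'\<le>n. c k' j' * Z k' j') = c m n * Z m n"
proof -
  have i: "(\<Sum>j'\<le>n. c k' j' * Z k' j') = (if k' = m then c m n * Z m n else 0)" if "k' \<le> m" for k'
  proof -
    have "(\<Sum>j'\<le>n. c k' j' * Z k' j') = (\<Sum>j'\<le>n. if j' = n then (if k' = m then c m n * Z m n else 0) else 0)"
      using assms that by (intro sum.cong refl) auto
    then show ?thesis by simp
  qed
  have "(\<Sum>k'\<le>m. \<Sum>j'\<le>n. c k' j' * Z k' j') = (\<Sum>k'\<le>m. if k' = m then c m n * Z m n else 0)"
    using i by (intro sum.cong refl) auto
  then show ?thesis by simp
qed

definition bco :: "nat \<Rightarrow> (nat \<Rightarrow> nat \<Rightarrow> real) \<Rightarrow> nat \<Rightarrow> nat \<Rightarrow> real" where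
  "bco m c k j = (\<Sum>i\<le>m. (-1) ^ i * c (k + i) (j + i))"

lemma bco_zero:
  assumes cz: "\<And>k j. m < k \<or> n < j \<Longrightarrow> c k j = 0" and "m < k \<or> n < j"
  shows "bco m c k j = 0"
  unfolding bco_def using assms by (intro sum.neutral) auto

lemma bco_rel:
  assumes cz: "\<And>k j. m < k \<or> n < j \<Longrightarrow> c k j = 0"
  shows "bco m c k j + bco m c (Suc k) (Suc j) = c k j"
proof -
  let ?g = "\<lambda>i. (-1) ^ i * c (k + i) (j + i)"
  have "bco m c (Suc k) (Suc j) = (\<Sum>i\<le>m. - ?g (Suc i))"
    unfolding bco_def by (intro sum.cong refl) simp
  then have "bco m c k j + bco m c (Suc k) (Suc j) = (\<Sum>i\<le>m. ?g i - ?g (Suc i))"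
    by (simp add: bco_def sum.distrib[symmetric])
  also have "\<dots> = ?g 0 - ?g (Suc m)" by (rule sum_telescope)
  also have "?g (Suc m) = 0" using cz[of "k + Suc m" "j + Suc m"] by simp
  finally show ?thesis by simp
qed

lemma shift1: "(\<Sum>k\<le>N. if k \<ge> 1 then f k else 0) = (\<Sum>k<N. (f (Suc k) :: complex))"
  by (induction N) auto

lemma ext1: "f (N::nat) = 0 \<Longrightarrow> (\<Sum>k<N. f k) = (\<Sum>k\<le>N. (f k :: complex))"
  using sum.lessThan_Suc[of f N] unfolding lessThan_Suc_atMost by simp

lemma shift2:
  fixes h :: "nat \<Rightarrow> nat \<Rightarrow> complex"
  assumes z1: "\<And>j. h (Suc m) j = 0" and z2: "\<And>k. h k (Suc n) = 0"
  shows "(\<Sum>k\<le>m. \<Sum>j\<le>n. if k \<ge> 1 \<and> j \<ge> 1 then h k j else 0) = (\<Sum>k\<le>m. \<Sum>j\<le>n. h (Suc k) (Suc j))"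
proof -
  have "(\<Sum>k\<le>m. \<Sum>j\<le>n. if k \<ge> 1 \<and> j \<ge> 1 then h k j else 0)
      = (\<Sum>k\<le>m. if k \<ge> 1 then (\<Sum>j\<le>n. if j \<ge> 1 then h k j else 0) else 0)"
    by (intro sum.cong refl) auto
  also have "\<dots> = (\<Sum>k\<le>m. if k \<ge> 1 then (\<Sum>j\<le>n. h k (Suc j)) else 0)"
  proof (intro sum.cong refl)
    fix k
    have "(\<Sum>j\<le>n. if j \<ge> 1 then h k j else 0) = (\<Sum>j<n. h k (Suc j))" by (rule shift1)
    also have "\<dots> = (\<Sum>j\<le>n. h k (Suc j))" by (rule ext1) (simp add: z2)
    finally show "(if k \<ge> 1 then (\<Sum>j\<le>n. if j \<ge> 1 then h k j else 0) else 0) = (if k \<ge> 1 then (\<Sum>j\<le>n. h k (Suc j)) else 0)"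
      by simp
  qed
  also have "\<dots> = (\<Sum>k<m. \<Sum>j\<le>n. h (Suc k) (Suc j))" by (rule shift1)
  also have "\<dots> = (\<Sum>k\<le>m. \<Sum>j\<le>n. h (Suc k) (Suc j))" by (rule ext1) (simp add: z1)
  finally show ?thesis .
qed

lemma rearr:
  fixes E F :: "nat \<Rightarrow> nat \<Rightarrow> complex" and c :: "nat \<Rightarrow> nat \<Rightarrow> real" and m n :: nat
  assumes FE: "\<And>k j. F k j = E k j - (if k \<ge> 1 \<and> j \<ge> 1 then F (k - 1) (j - 1) else 0)"
    and cz: "\<And>k j. m < k \<or> n < j \<Longrightarrow> c k j = 0"
  shows "(\<Sum>k\<le>m. \<Sum>j\<le>n. complex_of_real (c k j) * F k j)
       = (\<Sum>k\<le>m. \<Sum>j\<le>n. complex_of_real (bco m c k j) * E k j)"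
proof -
  let ?B = "\<lambda>k j. complex_of_real (bco m c k j)"
  have ceq: "complex_of_real (c k j) = ?B k j + ?B (Suc k) (Suc j)" for k j
    by (simp only: of_real_add[symmetric] bco_rel[OF cz])
  have z: "?B (Suc m) j = 0" "?B k (Suc n) = 0" for k j
    using bco_zero[OF cz] by auto
  have "(\<Sum>k\<le>m. \<Sum>j\<le>n. complex_of_real (c k j) * F k j)
     = (\<Sum>k\<le>m. \<Sum>j\<le>n. ?B k j * F k j) + (\<Sum>k\<le>m. \<Sum>j\<le>n. ?B (Suc k) (Suc j) * F k j)"
    by (simp only: ceq distrib_right sum.distrib)
  also have "(\<Sum>k\<le>m. \<Sum>j\<le>n. ?B k j * F k j)
     = (\<Sum>k\<le>m. \<Sum>j\<le>n. ?B k j * E k j) - (\<Sum>k\<le>m. \<Sum>j\<le>n. if k \<ge> 1 \<and> j \<ge> 1 then ?B k j * F (k - 1) (j - 1) else 0)"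
  proof -
    have t: "?B k j * F k j = ?B k j * E k j - (if k \<ge> 1 \<and> j \<ge> 1 then ?B k j * F (k - 1) (j - 1) else 0)" for k j
      by (subst FE[of k j]) (simp add: right_diff_distrib)
    show ?thesis by (simp only: t sum_subtractf)
  qed
  also have "(\<Sum>k\<le>m. \<Sum>j\<le>n. if k \<ge> 1 \<and> j \<ge> 1 then ?B k j * F (k - 1) (j - 1) else 0)
      = (\<Sum>k\<le>m. \<Sum>j\<le>n. ?B (Suc k) (Suc j) * F k j)"
  proof -
    have "(\<Sum>k\<le>m. \<Sum>j\<le>n. if k \<ge> 1 \<and> j \<ge> 1 then ?B k j * F (k - 1) (j - 1) else 0)
      = (\<Sum>k\<le>m. \<Sum>j\<le>n. ?B (Suc k) (Suc j) * F (Suc k - 1) (Suc j - 1))"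
      by (rule shift2[where h = "\<lambda>k j. ?B k j * F (k - 1) (j - 1)"]) (simp_all add: z)
    then show ?thesis by simp
  qed
  finally show ?thesis by simp
qed

lemma gmn_gamma:
  assumes a: "adm L l y" and l2: "2 \<le> l" and yh: "y \<in> hecke L"
  shows "gmn L q l y k j = Ev L l y k j"
proof -
  let ?A = "Acoef (pq q) (real L)"
  have HX: "Hop L q (Ev L l y k j) = (\<lambda>v. Ev L l y (Suc k) j v + complex_of_real (pq q) * Ev L l y k j v
       + (if k \<ge> 1 then (of_nat L - 1) * Ev L l y (k - 1) j v else 0))" for k j
    using HE'[OF a, of q k j] l2 by (simp cong: if_cong)
  have KX: "Kop L q (Ev L l y k j) = (\<lambda>v. Ev L l y k (Suc j) v + complex_of_real (pq q) * Ev L l y k j v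
       + (if j \<ge> 1 then (of_nat L - 1) * Ev L l y k (j - 1) v else 0))" for k j
    using KE'[OF a, of q k j] l2 by (simp cong: if_cong)
  have T: "Rop L q j (Sop L q k y) = (\<lambda>v. \<Sum>k'\<le>k. \<Sum>j'\<le>j.
            complex_of_real (?A k k' * ?A j j') * Ev L l y k' j' v)"
    using twoD[of L q "Ev L l y" j k, OF HX KX good_Ev] by (simp add: Ev00[OF a])
  show ?thesis
  proof
    fix v
    show "gmn L q l y k j v = Ev L l y k j v"
    proof (cases "length v = k + j + l")
      case True
      have "gmn L q l y k j v = (\<Sum>k'\<le>k. \<Sum>j'\<le>j. complex_of_real (?A k k' * ?A j j') * Ev L l y k' j' v)"
        using True by (simp add: gmn_def proj_len_def hmult_main[OF yh] T)
      also have "\<dots> = complex_of_real (?A k k * ?A j j) * Ev L l y k j v"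
        by (rule proj_delta) (use True in \<open>auto intro!: Ev_len\<close>)
      finally show ?thesis by (simp add: Acoef_top)
    next
      case False
      then show ?thesis by (simp add: gmn_def proj_len_def Ev_len)
    qed
  qed
qed

lemma gmn_beta:
  assumes a: "adm L 1 y" and yh: "y \<in> hecke L"
  shows "gmn L q 1 y k j = Ev L 1 y k j"
proof -
  let ?A = "Acoef (pq q) (real L)"
  have F00: "Ev L (Suc 0) y 0 0 = y" using Ev00[OF a] by simp
  have T: "Rop L q j (Sop L q k y) = (\<lambda>v. \<Sum>k'\<le>k. \<Sum>j'\<le>j.
            complex_of_real (?A k k' * ?A j j') * Fv L y k' j' v)"
    using twoD[of L q "Fv L y" j k, OF HF[OF a] KF[OF a] good_Fv] by (simp add: F00)
  show ?thesis
  proof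
    fix v
    show "gmn L q 1 y k j v = Ev L 1 y k j v"
    proof (cases "length v = k + j + 1")
      case True
      have "gmn L q 1 y k j v = (\<Sum>k'\<le>k. \<Sum>j'\<le>j. complex_of_real (?A k k' * ?A j j') * Fv L y k' j' v)"
        using True by (simp add: gmn_def proj_len_def hmult_main[OF yh] T)
      also have "\<dots> = complex_of_real (?A k k * ?A j j) * Fv L y k j v"
        by (rule proj_delta) (use True in \<open>auto intro!: Fv_len\<close>)
      finally show ?thesis using True by (simp add: Acoef_top Fv_top)
    next
      case False
      then show ?thesis by (simp add: gmn_def proj_len_def Ev_len)
    qed
  qed
qed

theorem lemma3p5:
  fixes L l :: nat and q :: real and \<beta> \<gamma> :: "nat list \<Rightarrow> complex"
  assumes "L \<ge> 3"
    and "1 / real (L - 1) \<le> q" and "q \<le> 1"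
    and "l \<ge> 2"
    and "\<beta> \<in> ominus (hecke_l L 1) (S_sp L q 1)"
    and "\<gamma> \<in> ominus (hecke_l L l) (S_sp L q l)"
  shows "\<forall>m n. \<exists>b c :: nat \<Rightarrow> nat \<Rightarrow> real.
     hmult L q (hmult L q (hsum L m) \<beta>) (hsum L n)
       = (\<lambda>v. \<Sum>k\<le>m. \<Sum>j\<le>n. complex_of_real (b k j) * gmn L q 1 \<beta> k j v)
   \<and> hmult L q (hmult L q (hsum L m) \<gamma>) (hsum L n)
       = (\<lambda>v. \<Sum>k\<le>m. \<Sum>j\<le>n. complex_of_real (c k j) * gmn L q l \<gamma> k j v)
   \<and> (1 \<le> m \<and> 1 \<le> n \<longrightarrow>
        (\<forall>k\<le>m. \<forall>j\<le>n. c k j = b k j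
             + (if k + 1 \<le> m \<and> j + 1 \<le> n then b (k + 1) (j + 1) else 0)))"
proof (intro allI)
  fix m n :: nat
  let ?A = "Acoef (pq q) (real L)"
  have l1: "1 \<le> l" using assms(4) by simp
  note fb = ort_facts[OF assms(5), simplified]
  note fg = ort_facts[OF assms(6) l1]
  have ab: "adm L 1 \<beta>" using fb by (simp add: adm_def)
  have ag: "adm L l \<gamma>" using fg by (simp add: adm_def)
  have bh: "\<beta> \<in> hecke L" and gh: "\<gamma> \<in> hecke L" using fb fg by auto
  define cx where "cx k j = (if k \<le> m \<and> j \<le> n then ?A m k * ?A n j else 0)" for k j
  define b where "b = bco m cx"
  have cz: "\<And>k j. m < k \<or> n < j \<Longrightarrow> cx k j = 0" by (auto simp: cx_def)
  have E1: "hmult L q (hmult L q (hsum L m) \<beta>) (hsum L n)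
       = (\<lambda>v. \<Sum>k\<le>m. \<Sum>j\<le>n. complex_of_real (b k j) * gmn L q 1 \<beta> k j v)"
  proof
    fix v
    have F00: "Ev L (Suc 0) \<beta> 0 0 = \<beta>" using Ev00[OF ab] by simp
    have "hmult L q (hmult L q (hsum L m) \<beta>) (hsum L n) v = Rop L q n (Sop L q m (Fv L \<beta> 0 0)) v"
      by (simp add: hmult_main[OF bh] F00)
    also have "\<dots> = (\<Sum>k\<le>m. \<Sum>j\<le>n. complex_of_real (?A m k * ?A n j) * Fv L \<beta> k j v)"
      by (simp only: twoD[of L q "Fv L \<beta>" n m, OF HF[OF ab] KF[OF ab] good_Fv])
    also have "\<dots> = (\<Sum>k\<le>m. \<Sum>j\<le>n. complex_of_real (cx k j) * Fv L \<beta> k j v)"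
      by (intro sum.cong refl) (simp add: cx_def)
    also have "\<dots> = (\<Sum>k\<le>m. \<Sum>j\<le>n. complex_of_real (b k j) * Ev L 1 \<beta> k j v)"
      unfolding b_def
    proof (rule rearr[OF _ cz])
      fix k j
      show "Fv L \<beta> k j v = Ev L 1 \<beta> k j v - (if k \<ge> 1 \<and> j \<ge> 1 then Fv L \<beta> (k - 1) (j - 1) v else 0)"
        by (cases k; cases j) simp_all
    qed
    also have "\<dots> = (\<Sum>k\<le>m. \<Sum>j\<le>n. complex_of_real (b k j) * gmn L q 1 \<beta> k j v)"
      unfolding gmn_beta[OF ab bh] ..
    finally show "hmult L q (hmult L q (hsum L m) \<beta>) (hsum L n) v
       = (\<Sum>k\<le>m. \<Sum>j\<le>n. complex_of_real (b k j) * gmn L q 1 \<beta> k j v)" .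
  qed
  have E2: "hmult L q (hmult L q (hsum L m) \<gamma>) (hsum L n)
       = (\<lambda>v. \<Sum>k\<le>m. \<Sum>j\<le>n. complex_of_real (cx k j) * gmn L q l \<gamma> k j v)"
  proof
    fix v
    have l1': "l \<noteq> 1" using assms(4) by simp
    have HX: "Hop L q (Ev L l \<gamma> k j) = (\<lambda>v. Ev L l \<gamma> (Suc k) j v + complex_of_real (pq q) * Ev L l \<gamma> k j v
       + (if k \<ge> 1 then (of_nat L - 1) * Ev L l \<gamma> (k - 1) j v else 0))" for k j
      using HE'[OF ag l1, of q k j] l1' by (simp cong: if_cong)
    have KX: "Kop L q (Ev L l \<gamma> k j) = (\<lambda>v. Ev L l \<gamma> k (Suc j) v + complex_of_real (pq q) * Ev L l \<gamma> k j v
       + (if j \<ge> 1 then (of_nat L - 1) * Ev L l \<gamma> k (j - 1) v else 0))" for k j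
      using KE'[OF ag l1, of q k j] l1' by (simp cong: if_cong)
    have "hmult L q (hmult L q (hsum L m) \<gamma>) (hsum L n) v = Rop L q n (Sop L q m (Ev L l \<gamma> 0 0)) v"
      by (simp add: hmult_main[OF gh] Ev00[OF ag])
    also have "\<dots> = (\<Sum>k\<le>m. \<Sum>j\<le>n. complex_of_real (?A m k * ?A n j) * Ev L l \<gamma> k j v)"
      by (simp only: twoD[of L q "Ev L l \<gamma>" n m, OF HX KX good_Ev])
    also have "\<dots> = (\<Sum>k\<le>m. \<Sum>j\<le>n. complex_of_real (cx k j) * gmn L q l \<gamma> k j v)"
      by (intro sum.cong refl) (simp add: cx_def gmn_gamma[OF ag assms(4) gh])
    finally show "hmult L q (hmult L q (hsum L m) \<gamma>) (hsum L n) v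
       = (\<Sum>k\<le>m. \<Sum>j\<le>n. complex_of_real (cx k j) * gmn L q l \<gamma> k j v)" .
  qed
  have R: "\<forall>k\<le>m. \<forall>j\<le>n. cx k j = b k j
             + (if k + 1 \<le> m \<and> j + 1 \<le> n then b (k + 1) (j + 1) else 0)"
  proof (intro allI impI)
    fix k j assume "k \<le> m" "j \<le> n"
    have "b k j + b (Suc k) (Suc j) = cx k j" unfolding b_def by (rule bco_rel[OF cz])
    moreover have "\<not> (k + 1 \<le> m \<and> j + 1 \<le> n) \<Longrightarrow> b (Suc k) (Suc j) = 0"
      unfolding b_def by (rule bco_zero[OF cz]) auto
    ultimately show "cx k j = b k j + (if k + 1 \<le> m \<and> j + 1 \<le> n then b (k + 1) (j + 1) else 0)"
      by auto
  qed
  show "\<exists>b c :: nat \<Rightarrow> nat \<Rightarrow> real.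
     hmult L q (hmult L q (hsum L m) \<beta>) (hsum L n)
       = (\<lambda>v. \<Sum>k\<le>m. \<Sum>j\<le>n. complex_of_real (b k j) * gmn L q 1 \<beta> k j v)
   \<and> hmult L q (hmult L q (hsum L m) \<gamma>) (hsum L n)
       = (\<lambda>v. \<Sum>k\<le>m. \<Sum>j\<le>n. complex_of_real (c k j) * gmn L q l \<gamma> k j v)
   \<and> (1 \<le> m \<and> 1 \<le> n \<longrightarrow>
        (\<forall>k\<le>m. \<forall>j\<le>n. c k j = b k j
             + (if k + 1 \<le> m \<and> j + 1 \<le> n then b (k + 1) (j + 1) else 0)))"
    using E1 E2 R by blast
qed

end
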